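(* (A) Let $t\in\mathcal{S}'(\mathbb{R}^N)$ satisfy $t(q)=O^{\mathrm{dist}}(|q|^\delta)$ for some $\delta\in\mathbb{R}$. Then for every $g\in\mathcal{S}(\mathbb{R}^N)$, $$\int \frac{\mathrm{d}^N q}{(2\pi)^N}\, t(q)\, g_\epsilon(q) = O(\epsilon^\delta)\quad\text{as } \epsilon\searrow 0,$$ where $g_\epsilon(q):=\epsilon^{-N}g(q/\epsilon)$. (B) Let $t\in\mathcal{S}'(\mathbb{R}^N)$ be such that $t(q)=c+O^{\mathrm{dist}}(|q|^\delta)$ (i.e. $t-c=O^{\mathrm{dist}}(|q|^\delta)$) for some $\delta>0$ and $c\in\mathbb{C}$. Then $t$ has the value $t(0)=c$ at zero in the sense of Łojasiewicz. (C) Let $t\in\mathcal{S}'(\mathbb{R}^N)$ satisfy $t(q)=O^{\mathrm{dist}}(|q|^\delta)$, where $\delta\in\mathbb{R}$ and $\omega\in\mathbb{N}_+$ are such that $\delta+1>\omega$. Then $t$ has a zero of order $\omega$ at the origin in the sense of Łojasiewicz.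
   Context: Generalized big-O for distributions: for $t\in\mathcal{S}'(\mathbb{R}^N\times\mathbb{R}^M)$ and $\delta\in\mathbb{R}$ one writes $t(q,q')=O^{\mathrm{dist}}(|q|^\delta)$ ($q\in\mathbb{R}^N$, $q'\in\mathbb{R}^M$) iff there exist a neighborhood $\mathcal{O}$ of the origin in $\mathbb{R}^N\times\mathbb{R}^M$ and continuous functions $t_\alpha\in C(\mathcal{O})$, indexed by multi-indices $\alpha\in\mathbb{N}_0^N$, such that: (1) $t_\alpha\equiv 0$ for all but finitely many $\alpha$; (2) $t_\alpha\equiv0$ whenever $\delta+|\alpha|<0$; (3) $|t_\alpha(q,q')|\le \mathrm{const}\,|q|^{\delta+|\alpha|}$ on $\mathcal{O}$; (4) $t=\sum_\alpha \partial_q^\alpha t_\alpha$ as distributions on $\mathcal{O}$. Here $M=0$ is allowed (then $t(q)=O^{\mathrm{dist}}(|q|^\delta)$ for $t\in\mathcal{S}'(\mathbb{R}^N)$). Value in the sense of Łojasiewicz: $t\in\mathcal{S}'(\mathbb{R}^N)$ has value $t(0)\in\mathbb{C}$ at zero iff $\lim_{\epsilon\searrow0}\int\frac{\mathrm{d}^Nq}{(2\pi)^N}t(q)g_\epsilon(q)$ exists and equals $t(0)$ for every $g\in\mathcal{S}(\mathbb{R}^N)$ with $\int\frac{\mathrm{d}^Nq}{(2\pi)^N}g(q)=1$, where $g_\epsilon(q)=\epsilon^{-N}g(q/\epsilon)$. The distribution $t$ has a zero of order $\omega\in\mathbb{N}_+$ at the origin in the sense of Łojasiewicz iff for every multi-index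 $\gamma$ with $|\gamma|<\omega$ the distribution $\partial_q^\gamma t$ has value $0$ at zero in the sense of Łojasiewicz. *)

theory Defs
  imports "HOL-Analysis.Analysis" "HOL-Library.Landau_Symbols"
begin

text \<open>Functions on R^N are modelled as maps real^'n \<Rightarrow> complex, N = CARD('n).
  Distributions are (linear, continuous) functionals on such functions; the
  pairing T g stands for the paper's integral of t(q) g(q) d^Nq/(2 pi)^N.\<close>

definition partial :: "'n::finite \<Rightarrow> (real^'n \<Rightarrow> complex) \<Rightarrow> real^'n \<Rightarrow> complex" where
  "partial i f = (\<lambda>x. frechet_derivative f (at x) (axis i 1))"

definition dpartial :: "'n::finite list \<Rightarrow> (real^'n \<Rightarrow> complex) \<Rightarrow> real^'n \<Rightarrow> complex" where
  "dpartial is f = foldr partial is f"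

text \<open>Multi-indices alpha :: 'n \<Rightarrow> nat; partial^alpha via a list of directions with the
  right multiplicities (order irrelevant for smooth functions).\<close>
definition mlist :: "('n::finite \<Rightarrow> nat) \<Rightarrow> 'n list" where
  "mlist \<alpha> = (SOME xs. \<forall>i. count_list xs i = \<alpha> i)"

definition mpartial :: "('n::finite \<Rightarrow> nat) \<Rightarrow> (real^'n \<Rightarrow> complex) \<Rightarrow> real^'n \<Rightarrow> complex" where
  "mpartial \<alpha> f = dpartial (mlist \<alpha>) f"

definition mabs :: "('n::finite \<Rightarrow> nat) \<Rightarrow> nat" where
  "mabs \<alpha> = (\<Sum>i\<in>UNIV. \<alpha> i)"

definition smooth_fun :: "(real^'n::finite \<Rightarrow> complex) \<Rightarrow> bool" where
  "smooth_fun f \<longleftrightarrow> (\<forall>is x. dpartial is f differentiable (at x))"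

definition schwartz :: "(real^'n::finite \<Rightarrow> complex) \<Rightarrow> bool" where
  "schwartz f \<longleftrightarrow> smooth_fun f \<and>
     (\<forall>is (k::nat). bounded (range (\<lambda>x. (1 + norm x) ^ k * norm (dpartial is f x))))"

definition schwartz_seminorm :: "nat \<Rightarrow> (real^'n::finite \<Rightarrow> complex) \<Rightarrow> real" where
  "schwartz_seminorm m f = Sup ((\<lambda>(x, is, k). (1 + norm x) ^ k * norm (dpartial is f x))
       ` {(x, is, k). length is \<le> m \<and> k \<le> m})"

definition tempered :: "((real^'n::finite \<Rightarrow> complex) \<Rightarrow> complex) \<Rightarrow> bool" where
  "tempered T \<longleftrightarrow>
     (\<forall>f g. schwartz f \<and> schwartz g \<longrightarrow> T (\<lambda>x. f x + g x) = T f + T g) \<and>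
     (\<forall>f (a::complex). schwartz f \<longrightarrow> T (\<lambda>x. a * f x) = a * T f) \<and>
     (\<exists>C m. \<forall>f. schwartz f \<longrightarrow> norm (T f) \<le> C * schwartz_seminorm m f)"

definition normc :: "'n::finite itself \<Rightarrow> complex" where
  "normc _ = complex_of_real (inverse ((2 * pi) ^ CARD('n)))"

definition fun_dist :: "(real^'n::finite \<Rightarrow> complex) \<Rightarrow> (real^'n \<Rightarrow> complex) \<Rightarrow> complex" where
  "fun_dist f \<phi> = normc TYPE('n) * (LINT q|lborel. f q * \<phi> q)"

definition tsupport :: "(real^'n::finite \<Rightarrow> complex) \<Rightarrow> (real^'n) set" where
  "tsupport \<phi> = closure {x. \<phi> x \<noteq> 0}"

definition dist_deriv :: "('n::finite \<Rightarrow> nat) \<Rightarrow> ((real^'n \<Rightarrow> complex) \<Rightarrow> complex)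
     \<Rightarrow> (real^'n \<Rightarrow> complex) \<Rightarrow> complex" where
  "dist_deriv \<gamma> T \<phi> = (-1) ^ mabs \<gamma> * T (mpartial \<gamma> \<phi>)"

text \<open>Generalized big-O (case M = 0). The bound (3) is required for q \<noteq> 0 only,
  which is exactly the meaning of |q|^(delta+|alpha|) with the usual conventions at q = 0
  (continuity handles q = 0).\<close>
definition Odist :: "((real^'n::finite \<Rightarrow> complex) \<Rightarrow> complex) \<Rightarrow> real \<Rightarrow> bool" where
  "Odist T \<delta> \<longleftrightarrow> (\<exists>U (ta :: ('n \<Rightarrow> nat) \<Rightarrow> real^'n \<Rightarrow> complex).
     open U \<and> 0 \<in> U \<and>
     (\<forall>\<alpha>. continuous_on U (ta \<alpha>)) \<and>
     finite {\<alpha>. \<exists>q\<in>U. ta \<alpha> q \<noteq> 0} \<and>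
     (\<forall>\<alpha>. \<delta> + real (mabs \<alpha>) < 0 \<longrightarrow> (\<forall>q\<in>U. ta \<alpha> q = 0)) \<and>
     (\<forall>\<alpha>. \<exists>C. \<forall>q\<in>U. q \<noteq> 0 \<longrightarrow> norm (ta \<alpha> q) \<le> C * norm q powr (\<delta> + real (mabs \<alpha>))) \<and>
     (\<forall>\<phi>. smooth_fun \<phi> \<and> compact (tsupport \<phi>) \<and> tsupport \<phi> \<subseteq> U \<longrightarrow>
        T \<phi> = (\<Sum>\<alpha>\<in>{\<alpha>. \<exists>q\<in>U. ta \<alpha> q \<noteq> 0}.
                    (-1) ^ mabs \<alpha> * fun_dist (ta \<alpha>) (mpartial \<alpha> \<phi>))))"

definition rescale :: "real \<Rightarrow> (real^'n::finite \<Rightarrow> complex) \<Rightarrow> real^'n \<Rightarrow> complex" where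
  "rescale \<epsilon> g = (\<lambda>q. complex_of_real (inverse \<epsilon> ^ CARD('n)) * g (inverse \<epsilon> *\<^sub>R q))"

definition has_value_at_zero :: "((real^'n::finite \<Rightarrow> complex) \<Rightarrow> complex) \<Rightarrow> complex \<Rightarrow> bool" where
  "has_value_at_zero T v \<longleftrightarrow>
     (\<forall>g. schwartz g \<and> fun_dist (\<lambda>_. 1) g = 1 \<longrightarrow>
        ((\<lambda>\<epsilon>. T (rescale \<epsilon> g)) \<longlongrightarrow> v) (at_right 0))"

definition zero_of_order :: "((real^'n::finite \<Rightarrow> complex) \<Rightarrow> complex) \<Rightarrow> nat \<Rightarrow> bool" where
  "zero_of_order T \<omega> \<longleftrightarrow> (\<forall>\<gamma>. mabs \<gamma> < \<omega> \<longrightarrow> has_value_at_zero (dist_deriv \<gamma> T) 0)"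

end

theory Submission
  imports Defs "HOL-Probability.Sinc_Integral" "HOL-Computational_Algebra.Polynomial"
begin


lemma frechet_derivative_cong_open:
  assumes "open S" "x \<in> S" "\<And>y. y \<in> S \<Longrightarrow> f y = g y"
  shows "frechet_derivative f (at x) = frechet_derivative g (at x)"
proof -
  have "(f has_derivative D) (at x) \<longleftrightarrow> (g has_derivative D) (at x)" for D
    using has_derivative_transform_within_open[of f D x UNIV S g]
      has_derivative_transform_within_open[of g D x UNIV S f] assms by auto
  thus ?thesis unfolding frechet_derivative_def by simp
qed

lemma partial_has_derivative: "(f has_derivative D) (at x) \<Longrightarrow> partial i f x = D (axis i 1)"
  unfolding partial_def using frechet_derivative_at by metis

lemma dpartial_Nil[simp]: "dpartial [] f = f" by (simp add: dpartial_def)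
lemma dpartial_Cons[simp]: "dpartial (i#is) f = partial i (dpartial is f)" by (simp add: dpartial_def)
lemma dpartial_append: "dpartial (is @ js) f = dpartial is (dpartial js f)" by (simp add: dpartial_def)

lemma dpartial_local:
  assumes "open S" "\<And>y. y \<in> S \<Longrightarrow> f y = g y" "x \<in> S"
  shows "dpartial is f x = dpartial is g x"
  using assms(3)
proof (induction "is" arbitrary: x)
  case Nil thus ?case using assms by simp
next
  case (Cons i "is")
  have "frechet_derivative (dpartial is f) (at x) = frechet_derivative (dpartial is g) (at x)"
    by (rule frechet_derivative_cong_open[OF assms(1) Cons.prems]) (use Cons.IH in auto)
  thus ?case by (simp add: partial_def)
qed

lemma smooth_dpartial: "smooth_fun f \<Longrightarrow> smooth_fun (dpartial is f)"
  by (simp add: smooth_fun_def dpartial_append[symmetric])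

lemma smooth_differentiable: "smooth_fun f \<Longrightarrow> f differentiable (at x)"
  using smooth_fun_def[of f] dpartial_Nil by metis

lemma smooth_dp_differentiable: "smooth_fun f \<Longrightarrow> dpartial is f differentiable (at x)"
  using smooth_fun_def[of f] by metis

lemma smooth_continuous: "smooth_fun f \<Longrightarrow> continuous_on S (dpartial is f)"
  by (meson continuous_at_imp_continuous_on differentiable_imp_continuous_within smooth_dp_differentiable)

lemma hd_sum_list:
  "(\<And>c. c \<in> set cs \<Longrightarrow> (F c has_derivative D c) (at x)) \<Longrightarrow>
   ((\<lambda>y. \<Sum>c\<leftarrow>cs. F c y) has_derivative (\<lambda>h. \<Sum>c\<leftarrow>cs. D c h)) (at x)"
proof (induction cs)
  case Nil thus ?case by simp
next
  case (Cons c cs)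
  show ?case using has_derivative_add[OF Cons.prems[of c] Cons.IH] Cons.prems by simp
qed

lemma diff_sum_list:
  "(\<And>c. c \<in> set cs \<Longrightarrow> F c differentiable (at x)) \<Longrightarrow>
   partial i (\<lambda>y. \<Sum>c\<leftarrow>cs. F c y) x = (\<Sum>c\<leftarrow>cs. partial i (F c) x)"
proof -
  assume a: "\<And>c. c \<in> set cs \<Longrightarrow> F c differentiable (at x)"
  have "((\<lambda>y. \<Sum>c\<leftarrow>cs. F c y) has_derivative
      (\<lambda>h. \<Sum>c\<leftarrow>cs. frechet_derivative (F c) (at x) h)) (at x)"
    by (rule hd_sum_list) (use a frechet_derivative_works in blast)
  from partial_has_derivative[OF this] show ?thesis by (simp add: partial_def)
qed

lemma partial_add:
  assumes "f differentiable (at x)" "g differentiable (at x)"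
  shows "partial i (\<lambda>y. f y + g y) x = partial i f x + partial i g x"
proof -
  have "((\<lambda>y. f y + g y) has_derivative (\<lambda>h. frechet_derivative f (at x) h + frechet_derivative g (at x) h)) (at x)"
    using assms by (intro has_derivative_add) (auto simp: frechet_derivative_works)
  from partial_has_derivative[OF this] show ?thesis by (simp add: partial_def)
qed

lemma partial_mult:
  assumes "f differentiable (at x)" "g differentiable (at x)"
  shows "partial i (\<lambda>y. f y * g y) x = f x * partial i g x + partial i f x * g x"
proof -
  have "((\<lambda>y. f y * g y) has_derivative (\<lambda>h. f x * frechet_derivative g (at x) h + frechet_derivative f (at x) h * g x)) (at x)"
    using assms by (intro has_derivative_mult) (auto simp: frechet_derivative_works)
  from partial_has_derivative[OF this] show ?thesis by (simp add: partial_def)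
qed

lemma partial_cmult:
  assumes "f differentiable (at x)"
  shows "partial i (\<lambda>y. c * f y) x = c * partial i f x"
proof -
  have "((\<lambda>y. c * f y) has_derivative (\<lambda>h. c * frechet_derivative f (at x) h)) (at x)"
    using assms by (intro has_derivative_mult_right) (auto simp: frechet_derivative_works)
  from partial_has_derivative[OF this] show ?thesis by (simp add: partial_def)
qed

lemma partial_const: "partial i (\<lambda>y. c) x = 0"
proof -
  have "((\<lambda>y. c) has_derivative (\<lambda>h. 0)) (at x)" by simp
  from partial_has_derivative[OF this] show ?thesis by simp
qed

lemma dpartial_const: "dpartial is (\<lambda>y. c) = (if is = [] then (\<lambda>y. c) else (\<lambda>y. 0))"
proof (induction "is")
  case Nil thus ?case by simp
next
  case (Cons i "is") thus ?case by (cases "is = []") (simp_all add: partial_const)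
qed

lemma smooth_const: "smooth_fun (\<lambda>y. c)"
  unfolding smooth_fun_def by (simp add: dpartial_const)

lemma dpartial_add:
  assumes "smooth_fun f" "smooth_fun g"
  shows "dpartial is (\<lambda>y. f y + g y) = (\<lambda>y. dpartial is f y + dpartial is g y)"
proof (induction "is")
  case Nil thus ?case by simp
next
  case (Cons i "is") show ?case
    using assms by (simp only: dpartial_Cons Cons.IH) (auto simp: fun_eq_iff intro!: partial_add smooth_dp_differentiable)
qed

lemma smooth_add: "smooth_fun f \<Longrightarrow> smooth_fun g \<Longrightarrow> smooth_fun (\<lambda>y. f y + g y)"
  unfolding smooth_fun_def[of "\<lambda>y. f y + g y"] dpartial_add
  by (auto intro!: differentiable_add smooth_dp_differentiable)

lemma dpartial_cmult:
  assumes "smooth_fun f"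
  shows "dpartial is (\<lambda>y. c * f y) = (\<lambda>y. c * dpartial is f y)"
proof (induction "is")
  case Nil thus ?case by simp
next
  case (Cons i "is") show ?case
    using assms by (simp only: dpartial_Cons Cons.IH) (auto simp: fun_eq_iff intro!: partial_cmult smooth_dp_differentiable)
qed

lemma smooth_cmult: "smooth_fun f \<Longrightarrow> smooth_fun (\<lambda>y. c * f y)"
  unfolding smooth_fun_def[of "\<lambda>y. c * f y"] dpartial_cmult
  by (auto intro!: differentiable_mult differentiable_const smooth_dp_differentiable)

lemma smooth_minus: "smooth_fun f \<Longrightarrow> smooth_fun g \<Longrightarrow> smooth_fun (\<lambda>y. f y - g y)"
  using smooth_add[of f "\<lambda>y. (-1) * g y"] smooth_cmult[of g "-1"] by simp

lemma dpartial_minus: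
  assumes "smooth_fun f" "smooth_fun g"
  shows "dpartial is (\<lambda>y. f y - g y) = (\<lambda>y. dpartial is f y - dpartial is g y)"
  using dpartial_add[OF assms(1) smooth_cmult[OF assms(2), of "-1"]] dpartial_cmult[OF assms(2), where c="-1"]
  by simp

fun splits :: "'a list \<Rightarrow> ('a list \<times> 'a list) list" where
  "splits [] = [([], [])]"
| "splits (i#is) = map (\<lambda>p. (i # fst p, snd p)) (splits is) @ map (\<lambda>p. (fst p, i # snd p)) (splits is)"

lemma splits_length: "p \<in> set (splits is) \<Longrightarrow> length (fst p) + length (snd p) = length is"
  by (induction "is" arbitrary: p) auto

lemma dpartial_mult:
  assumes f: "smooth_fun f" and g: "smooth_fun g"
  shows "dpartial is (\<lambda>y. f y * g y) = (\<lambda>y. \<Sum>p\<leftarrow>splits is. dpartial (fst p) f y * dpartial (snd p) g y)"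
proof (induction "is")
  case Nil thus ?case by simp
next
  case (Cons i "is")
  show ?case
  proof
    fix x
    have "dpartial (i#is) (\<lambda>y. f y * g y) x =
      partial i (\<lambda>y. \<Sum>p\<leftarrow>splits is. dpartial (fst p) f y * dpartial (snd p) g y) x"
      using Cons.IH by simp
    also have "\<dots> = (\<Sum>p\<leftarrow>splits is. partial i (\<lambda>y. dpartial (fst p) f y * dpartial (snd p) g y) x)"
      by (rule diff_sum_list) (use f g in \<open>auto intro!: differentiable_mult smooth_dp_differentiable\<close>)
    also have "\<dots> = (\<Sum>p\<leftarrow>splits is. dpartial (fst p) f x * dpartial (i # snd p) g x
                                     + dpartial (i # fst p) f x * dpartial (snd p) g x)"
      using f g by (auto intro!: arg_cong[where f=sum_list] partial_mult smooth_dp_differentiable)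
    also have "\<dots> = (\<Sum>p\<leftarrow>splits (i#is). dpartial (fst p) f x * dpartial (snd p) g x)"
      by (simp add: sum_list_addf o_def add.commute)
    finally show "dpartial (i#is) (\<lambda>y. f y * g y) x = (\<Sum>p\<leftarrow>splits (i#is). dpartial (fst p) f x * dpartial (snd p) g x)" .
  qed
qed

lemma differentiable_sum_list:
  "(\<And>c. c \<in> set cs \<Longrightarrow> F c differentiable (at x)) \<Longrightarrow> (\<lambda>y. \<Sum>c\<leftarrow>cs. F c y) differentiable (at x)"
  using hd_sum_list[of cs F "\<lambda>c. frechet_derivative (F c) (at x)" x] frechet_derivative_works
  unfolding differentiable_def by blast

lemma smooth_mult: "smooth_fun f \<Longrightarrow> smooth_fun g \<Longrightarrow> smooth_fun (\<lambda>y. f y * g y)"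
  unfolding smooth_fun_def[of "\<lambda>y. f y * g y"] dpartial_mult
  by (auto intro!: differentiable_sum_list differentiable_mult smooth_dp_differentiable)

lemma dpartial_scale:
  assumes g: "smooth_fun g"
  shows "dpartial is (\<lambda>q. g (s *\<^sub>R q)) = (\<lambda>q. of_real s ^ length is * dpartial is g (s *\<^sub>R q))"
proof (induction "is")
  case Nil thus ?case by simp
next
  case (Cons i "is")
  show ?case
  proof
    fix x
    define D where "D = frechet_derivative (dpartial is g) (at (s *\<^sub>R x))"
    have hD: "(dpartial is g has_derivative D) (at (s *\<^sub>R x))"
      unfolding D_def using g frechet_derivative_works smooth_dp_differentiable by blast
    have "((\<lambda>q. of_real s ^ length is * dpartial is g (s *\<^sub>R q)) has_derivative
           (\<lambda>h. of_real s ^ length is * D (s *\<^sub>R h))) (at x)"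
      by (intro has_derivative_mult_right has_derivative_compose[where f="\<lambda>q. s *\<^sub>R q", OF _ hD]
           has_derivative_scaleR_right has_derivative_ident)
    from partial_has_derivative[OF this, of i]
    have "partial i (\<lambda>q. of_real s ^ length is * dpartial is g (s *\<^sub>R q)) x
       = of_real s ^ length is * D (s *\<^sub>R axis i 1)" .
    also have "D (s *\<^sub>R axis i 1) = s *\<^sub>R D (axis i 1)"
      using has_derivative_linear[OF hD] linear_scale by blast
    also have "D (axis i 1) = partial i (dpartial is g) (s *\<^sub>R x)"
      using partial_has_derivative[OF hD] by simp
    finally show "dpartial (i # is) (\<lambda>q. g (s *\<^sub>R q)) x = of_real s ^ length (i # is) * dpartial (i # is) g (s *\<^sub>R x)"
      using Cons.IH by (simp add: scaleR_conv_of_real mult_ac)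
  qed
qed

lemma scale_comp_differentiable:
  assumes "smooth_fun g" shows "(\<lambda>q. dpartial is g (s *\<^sub>R q)) differentiable (at x)"
proof -
  have "(\<lambda>q. s *\<^sub>R q) differentiable (at x)"
    using has_derivative_scaleR_right[OF has_derivative_ident, of s "at x"] unfolding differentiable_def by blast
  moreover have "dpartial is g differentiable (at (s *\<^sub>R x))" using assms smooth_dp_differentiable by blast
  ultimately show ?thesis using differentiable_chain_at[of "\<lambda>q. s *\<^sub>R q" x "dpartial is g"] by (simp add: o_def)
qed

lemma smooth_scale: "smooth_fun g \<Longrightarrow> smooth_fun (\<lambda>q. g (s *\<^sub>R q))"
  unfolding smooth_fun_def[of "\<lambda>q. g (s *\<^sub>R q)"] dpartial_scale
  by (auto intro!: differentiable_mult differentiable_const scale_comp_differentiable)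

lemma smooth_rescale: "smooth_fun g \<Longrightarrow> smooth_fun (rescale \<epsilon> g)"
  unfolding rescale_def by (intro smooth_cmult smooth_scale)

lemma dpartial_rescale:
  assumes "smooth_fun g"
  shows "dpartial is (rescale \<epsilon> g) = (\<lambda>q. of_real (inverse \<epsilon>) ^ length is * rescale \<epsilon> (dpartial is g) q)"
  unfolding rescale_def
  apply (subst dpartial_cmult[OF smooth_scale[OF assms]])
  apply (subst dpartial_scale[OF assms])
  by (simp add: mult_ac)



fun Pk :: "nat \<Rightarrow> real poly" where
  "Pk 0 = 1"
| "Pk (Suc k) = [:0,0,1:] * (Pk k - pderiv (Pk k))"

definition Ek :: "nat \<Rightarrow> real \<Rightarrow> real" where
  "Ek k t = (if 0 < t then poly (Pk k) (inverse t) * exp (- inverse t) else 0)"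

lemma poly_exp_tendsto: "((\<lambda>u::real. poly Q u * exp (- u)) \<longlongrightarrow> 0) at_top"
proof -
  have "((\<lambda>u. \<Sum>i\<le>degree Q. coeff Q i * (u ^ i / exp u)) \<longlongrightarrow> (\<Sum>i\<le>degree Q. coeff Q i * 0)) at_top"
    by (intro tendsto_sum tendsto_mult tendsto_const tendsto_power_div_exp_0)
  moreover have "poly Q u * exp (- u) = (\<Sum>i\<le>degree Q. coeff Q i * (u ^ i / exp u))" for u
    by (simp add: poly_altdef sum_distrib_left exp_minus divide_inverse mult_ac)
  ultimately show ?thesis by simp
qed

lemma Ek_deriv: "(Ek k has_real_derivative Ek (Suc k) t) (at t)"
proof (cases "t = 0")
  case True
  have lim: "((\<lambda>y. (Ek k y - Ek k 0) / (y - 0)) \<longlongrightarrow> 0) (at 0)"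
  proof (rule filterlim_split_at)
    show "((\<lambda>y. (Ek k y - Ek k 0) / (y - 0)) \<longlongrightarrow> 0) (at_left 0)"
    proof (rule Lim_transform_eventually[OF tendsto_const])
      show "\<forall>\<^sub>F y in at_left 0. 0 = (Ek k y - Ek k 0) / (y - 0)"
        by (simp add: eventually_at_left_field Ek_def) (auto intro: exI[of _ "-1"])
    qed
    have "((\<lambda>y. poly ([:0,1:] * Pk k) (inverse y) * exp (- inverse y)) \<longlongrightarrow> 0) (at_right 0)"
      by (rule filterlim_compose[OF poly_exp_tendsto filterlim_inverse_at_top_right])
    then show "((\<lambda>y. (Ek k y - Ek k 0) / (y - 0)) \<longlongrightarrow> 0) (at_right 0)"
    proof (rule Lim_transform_eventually)
      show "\<forall>\<^sub>F y in at_right 0. poly ([:0,1:] * Pk k) (inverse y) * exp (- inverse y) = (Ek k y - Ek k 0) / (y - 0)"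
        by (simp add: eventually_at_right_field Ek_def) (auto intro!: exI[of _ 1] simp: divide_inverse mult_ac)
    qed
  qed
  have "Ek (Suc k) 0 = 0" by (simp add: Ek_def)
  with lim True show ?thesis by (simp add: has_field_derivative_iff)
next
  case False
  show ?thesis
  proof (cases "t > 0")
    case True
    let ?P = "Pk k"
    have "((\<lambda>t. poly ?P (inverse t) * exp (- inverse t)) has_real_derivative
        (poly (pderiv ?P) (inverse t) * (- (inverse t * inverse t)) * exp (- inverse t)
          + poly ?P (inverse t) * (exp (- inverse t) * (inverse t * inverse t)))) (at t)"
      using True by (auto intro!: derivative_eq_intros simp: poly_DERIV)
    also have "(poly (pderiv ?P) (inverse t) * (- (inverse t * inverse t)) * exp (- inverse t)
          + poly ?P (inverse t) * (exp (- inverse t) * (inverse t * inverse t))) = Ek (Suc k) t"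
      using True by (simp add: Ek_def algebra_simps)
    finally have d: "((\<lambda>t. poly ?P (inverse t) * exp (- inverse t)) has_real_derivative Ek (Suc k) t) (at t)" .
    show ?thesis
      by (rule has_field_derivative_transform_within_open[OF d, of "{0<..}"]) (use True in \<open>auto simp: Ek_def\<close>)
  next
    case False2: False
    with False have t: "t < 0" by simp
    have "((\<lambda>t. 0) has_real_derivative 0) (at t)" by simp
    then have "(Ek k has_real_derivative 0) (at t)"
      by (rule has_field_derivative_transform_within_open[of _ _ _ "{..<0}"]) (use t in \<open>auto simp: Ek_def\<close>)
    with t show ?thesis by (simp add: Ek_def)
  qed
qed

lemma Ek0_pos: "t > 0 \<Longrightarrow> Ek 0 t > 0" by (simp add: Ek_def)
lemma Ek0_zero: "t \<le> 0 \<Longrightarrow> Ek 0 t = 0" by (simp add: Ek_def)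
lemma Ek0_nonneg: "Ek 0 t \<ge> 0" by (simp add: Ek_def)


lemma gen_hasder:
  "((\<lambda>x::real^'n::finite. Ek k (a + b * (x \<bullet> x))) has_derivative
     (\<lambda>h. Ek (Suc k) (a + b * (x \<bullet> x)) * (b * (x \<bullet> h + h \<bullet> x)))) (at x)"
proof -
  have i: "((\<lambda>x::real^'n. a + b * (x \<bullet> x)) has_derivative (\<lambda>h. b * (x \<bullet> h + h \<bullet> x))) (at x)"
    by (auto intro!: derivative_eq_intros)
  have e: "(Ek k has_derivative (*) (Ek (Suc k) (a + b * (x \<bullet> x)))) (at (a + b * (x \<bullet> x)))"
    using Ek_deriv has_field_derivative_imp_has_derivative by blast
  show ?thesis using has_derivative_compose[OF i e] by simp
qed

lemma partial_of_real:
  assumes "(F has_derivative DF) (at x)"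
  shows "partial i (\<lambda>x. complex_of_real (F x)) x = of_real (DF (axis i 1))"
  using partial_has_derivative[OF has_derivative_of_real[OF assms]] by simp

lemma axis_inner: "(x::real^'n::finite) \<bullet> axis i 1 + axis i 1 \<bullet> x = 2 * x $ i"
  by (simp add: inner_axis inner_axis')

inductive PH :: "real \<Rightarrow> real \<Rightarrow> (real^'n::finite \<Rightarrow> complex) \<Rightarrow> bool" for A B where
  gen: "PH A B (\<lambda>x. of_real (Ek k (a + b * (x \<bullet> x))))"
| coord: "PH A B (\<lambda>x. of_real (x $ i))"
| const: "PH A B (\<lambda>x. c)"
| winv: "PH A B (\<lambda>x. of_real (inverse (Ek 0 (B + (-1) * (x \<bullet> x)) + Ek 0 ((-A) + 1 * (x \<bullet> x)))))"
| add: "PH A B f \<Longrightarrow> PH A B g \<Longrightarrow> PH A B (\<lambda>x. f x + g x)"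
| mult: "PH A B f \<Longrightarrow> PH A B g \<Longrightarrow> PH A B (\<lambda>x. f x * g x)"

lemma den_pos: "A < B \<Longrightarrow> Ek 0 (B + (-1) * s) + Ek 0 ((-A) + 1 * s) > 0"
  using Ek0_pos[of "B + (-1) * s"] Ek0_pos[of "(-A) + 1 * s"] Ek0_nonneg[of "B + (-1) * s"] Ek0_nonneg[of "(-A) + 1 * s"]
  by (cases "s < B") auto

lemma PH_closed:
  assumes AB: "A < B" and "PH A B f"
  shows "(\<forall>x. f differentiable (at x)) \<and> (\<forall>i. PH A B (partial i f))"
  using assms(2)
proof induction
  case (gen k a b)
  have "partial i (\<lambda>x::real^'a. complex_of_real (Ek k (a + b * (x \<bullet> x)))) =
      (\<lambda>x. of_real (Ek (Suc k) (a + b * (x \<bullet> x))) * ((\<lambda>x. of_real (2 * b)) x * of_real (x $ i)))" for i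
    by (rule ext, subst partial_of_real[OF gen_hasder]) (simp add: axis_inner)
  moreover have "(\<lambda>x::real^'a. complex_of_real (Ek k (a + b * (x \<bullet> x)))) differentiable (at x)" for x
    unfolding differentiable_def by (rule exI, rule has_derivative_of_real[OF gen_hasder])
  ultimately show ?case by (auto intro!: PH.intros)
next
  case (coord j)
  have "((\<lambda>x::real^'a. x $ j) has_derivative (\<lambda>h. h $ j)) (at x)" for x
    by (rule bounded_linear_imp_has_derivative) (simp add: bounded_linear_vec_nth)
  note d = has_derivative_of_real[OF this]
  have "partial i (\<lambda>x::real^'a. complex_of_real (x $ j)) = (\<lambda>x. of_real (axis i 1 $ j))" for i
    by (rule ext, rule partial_has_derivative[OF d])
  with d show ?case unfolding differentiable_def by (auto intro!: PH.intros)
next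
  case (const c)
  show ?case by (auto simp: partial_const intro: PH.const)
next
  case winv
  define den where "den = (\<lambda>x::real^'a. Ek 0 (B + (-1) * (x \<bullet> x)) + Ek 0 ((-A) + 1 * (x \<bullet> x)))"
  define Dd where "Dd = (\<lambda>x h::real^'a. Ek (Suc 0) (B + (-1) * (x \<bullet> x)) * ((-1) * (x \<bullet> h + h \<bullet> x))
                  + Ek (Suc 0) ((-A) + 1 * (x \<bullet> x)) * (1 * (x \<bullet> h + h \<bullet> x)))"
  have dd: "(den has_derivative Dd x) (at x)" for x
    unfolding den_def Dd_def by (intro has_derivative_add gen_hasder)
  have dpos: "den x \<noteq> 0" for x using den_pos[OF AB] unfolding den_def by (metis less_irrefl)
  have hw: "((\<lambda>x. inverse (den x)) has_derivative (\<lambda>h. - (inverse (den x) * Dd x h * inverse (den x)))) (at x)" for x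
    by (rule Deriv.has_derivative_inverse[OF dpos dd])
  have "partial i (\<lambda>x. complex_of_real (inverse (den x))) =
     (\<lambda>x. (\<lambda>x. of_real (-1)) x * ((\<lambda>x. complex_of_real (inverse (den x))) x * (\<lambda>x. complex_of_real (inverse (den x))) x)
       * ((\<lambda>x. of_real (Ek (Suc 0) (B + (-1) * (x \<bullet> x)))) x * ((\<lambda>x. of_real (-2)) x * of_real (x $ i))
        + (\<lambda>x. of_real (Ek (Suc 0) ((-A) + 1 * (x \<bullet> x)))) x * ((\<lambda>x. of_real 2) x * of_real (x $ i))))" for i
    by (rule ext, subst partial_of_real[OF hw]) (simp add: Dd_def inner_axis inner_axis' algebra_simps)
  note eq = this
  have ph: "PH A B (\<lambda>x. complex_of_real (inverse (den x)))" unfolding den_def by (rule PH.winv)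
  have F: "\<forall>i. PH A B (partial i (\<lambda>x. complex_of_real (inverse (den x))))"
    unfolding eq by (intro allI, (rule ph PH.intros)+)
  have D: "\<forall>x. (\<lambda>x. complex_of_real (inverse (den x))) differentiable (at x)"
    unfolding differentiable_def by (intro allI exI, rule has_derivative_of_real[OF hw])
  from F D show ?case unfolding den_def by blast
next
  case (add f g)
  have "partial i (\<lambda>x. f x + g x) = (\<lambda>x. partial i f x + partial i g x)" for i
    using add by (auto intro!: ext partial_add)
  with add show ?case by (auto intro!: PH.intros differentiable_add)
next
  case (mult f g)
  have "partial i (\<lambda>x. f x * g x) = (\<lambda>x. f x * partial i g x + partial i f x * g x)" for i
    using mult by (auto intro!: ext partial_mult)
  with mult show ?case by (auto intro!: PH.intros differentiable_mult)
qed

lemma PH_smooth: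
  assumes AB: "A < B" and f: "PH A B f"
  shows "smooth_fun f"
proof -
  have "PH A B (dpartial is f)" for "is"
    by (induction "is") (use f PH_closed[OF AB] in auto)
  then show ?thesis unfolding smooth_fun_def using PH_closed[OF AB] by blast
qed


lemma dpartial_zero_open:
  assumes "open S" "\<And>y. y \<in> S \<Longrightarrow> f y = 0" "x \<in> S"
  shows "dpartial is f x = 0"
  using dpartial_local[OF assms(1), of f "\<lambda>_. 0" x "is"] assms by (simp add: dpartial_const)

lemma support_bounded_derivs:
  assumes f: "smooth_fun f" and z: "\<And>x. R < norm x \<Longrightarrow> f x = 0"
  shows "\<exists>K. \<forall>x. norm (dpartial is f x) \<le> K"
proof -
  have "compact (dpartial is f ` cball 0 R)"
    by (rule compact_continuous_image[OF smooth_continuous[OF f]]) simp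
  then obtain a where a: "\<And>x. x \<in> cball 0 R \<Longrightarrow> norm (dpartial is f x) \<le> a"
    using compact_imp_bounded bounded_iff by (metis image_eqI)
  have o: "open {x::real^'a. R < norm x}" by (intro open_Collect_less continuous_intros)
  have "norm (dpartial is f x) \<le> max a 0" for x
  proof (cases "norm x \<le> R")
    case True thus ?thesis using a[of x] by auto
  next
    case False
    then have "dpartial is f x = 0" by (intro dpartial_zero_open[OF o]) (auto intro: z)
    thus ?thesis by simp
  qed
  thus ?thesis by blast
qed

lemma bump_exists:
  assumes r: "0 < r1" "r1 < r2"
  shows "\<exists>(cf::real^'n::finite \<Rightarrow> complex). smooth_fun cf \<and> (\<forall>x. norm x < r1 \<longrightarrow> cf x = 1) \<and>
           (\<forall>x. r2 \<le> norm x \<longrightarrow> cf x = 0) \<and> (\<forall>is. \<exists>K. \<forall>x. norm (dpartial is cf x) \<le> K)"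
proof -
  define A where "A = r1^2"
  define B where "B = r2^2"
  have AB: "A < B" unfolding A_def B_def using r by (simp add: power_strict_mono)
  define cf where "cf = (\<lambda>x::real^'n. complex_of_real (Ek 0 (B + (-1) * (x \<bullet> x))) *
     complex_of_real (inverse (Ek 0 (B + (-1) * (x \<bullet> x)) + Ek 0 ((-A) + 1 * (x \<bullet> x)))))"
  have ph: "PH A B cf" unfolding cf_def by (intro PH.mult PH.gen PH.winv)
  have sm: "smooth_fun cf" by (rule PH_smooth[OF AB ph])
  have one: "cf x = 1" if "norm x < r1" for x
  proof -
    have "x \<bullet> x < A" unfolding A_def power2_norm_eq_inner[symmetric] using that norm_ge_zero
      by (simp add: power_strict_mono)
    then have "Ek 0 ((-A) + 1 * (x \<bullet> x)) = 0" "Ek 0 (B + (-1) * (x \<bullet> x)) > 0"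
      using AB by (auto intro!: Ek0_zero Ek0_pos)
    thus ?thesis unfolding cf_def by (simp del: of_real_inverse add: of_real_mult[symmetric])
  qed
  have zero: "cf x = 0" if "r2 \<le> norm x" for x
  proof -
    have "B \<le> x \<bullet> x" unfolding B_def power2_norm_eq_inner[symmetric] using that r
      by (simp add: power_mono)
    then have "Ek 0 (B + (-1) * (x \<bullet> x)) = 0" by (intro Ek0_zero) simp
    thus ?thesis unfolding cf_def by simp
  qed
  have "\<exists>K. \<forall>x. norm (dpartial is cf x) \<le> K" for "is"
    by (rule support_bounded_derivs[OF sm, of r2]) (use zero in auto)
  with sm one zero show ?thesis by blast
qed



lemma schwartz_smooth: "schwartz g \<Longrightarrow> smooth_fun g" by (simp add: schwartz_def)

lemma schwartz_bound:
  assumes "schwartz g"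
  shows "\<exists>K. \<forall>x. (1 + norm x) ^ k * norm (dpartial is g x) \<le> K"
proof -
  from assms have "bounded (range (\<lambda>x. (1 + norm x) ^ k * norm (dpartial is g x)))"
    by (simp add: schwartz_def)
  then obtain a where "\<forall>y\<in>range (\<lambda>x. (1 + norm x) ^ k * norm (dpartial is g x)). norm y \<le> a"
    by (auto simp: bounded_iff)
  then show ?thesis by (intro exI[of _ a]) auto
qed

lemma schwartz_boundI:
  assumes "smooth_fun g" "\<And>is k. \<exists>K. \<forall>x. (1 + norm x) ^ k * norm (dpartial is g x) \<le> K"
  shows "schwartz g"
  unfolding schwartz_def
proof (intro conjI assms allI)
  fix "is" k
  obtain K where K: "\<forall>x. (1 + norm x) ^ k * norm (dpartial is g x) \<le> K" using assms(2) by blast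
  show "bounded (range (\<lambda>x. (1 + norm x) ^ k * norm (dpartial is (g::real^'a \<Rightarrow> complex) x)))"
    unfolding bounded_iff by (intro exI[of _ K]) (use K in auto)
qed

lemma schwartz_dpartial: "schwartz g \<Longrightarrow> schwartz (dpartial js g)"
  by (simp add: schwartz_def smooth_dpartial dpartial_append[symmetric])

lemma norm_sum_list_le: "norm (\<Sum>c\<leftarrow>cs. F c) \<le> (\<Sum>c\<leftarrow>cs. norm (F c :: 'b::real_normed_vector))"
  by (induction cs) (auto intro: order_trans[OF norm_triangle_ineq])

lemma sum_list_bound:
  assumes "\<And>c. c \<in> set cs \<Longrightarrow> \<exists>K. \<forall>x. W x * norm (F c x :: 'b::real_normed_vector) \<le> K"
    and W: "\<And>x. W x \<ge> 0"
  shows "\<exists>K. \<forall>x. W x * norm (\<Sum>c\<leftarrow>cs. F c x) \<le> K"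
  using assms(1)
proof (induction cs)
  case Nil thus ?case by auto
next
  case (Cons c cs)
  obtain K1 where K1: "\<forall>x. W x * norm (F c x) \<le> K1" using Cons.prems by auto
  obtain K2 where K2: "\<forall>x. W x * norm (\<Sum>c\<leftarrow>cs. F c x) \<le> K2" using Cons by auto
  have "W x * norm (\<Sum>c\<leftarrow>c#cs. F c x) \<le> K1 + K2" for x
  proof -
    have "W x * norm (\<Sum>c\<leftarrow>c#cs. F c x) \<le> W x * (norm (F c x) + norm (\<Sum>c\<leftarrow>cs. F c x))"
      by (simp add: W mult_left_mono norm_triangle_ineq)
    also have "\<dots> \<le> K1 + K2" using K1 K2 by (simp add: distrib_left add_mono)
    finally show ?thesis .
  qed
  thus ?case by blast
qed

lemma schwartz_mult:
  assumes h: "smooth_fun h" and hb: "\<And>is. \<exists>K. \<forall>x. norm (dpartial is h x) \<le> K" and f: "schwartz f"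
  shows "schwartz (\<lambda>x. h x * f x)"
proof (rule schwartz_boundI)
  show "smooth_fun (\<lambda>x. h x * f x)" using h f by (simp add: smooth_mult schwartz_smooth)
  fix "is" k
  show "\<exists>K. \<forall>x. (1 + norm x) ^ k * norm (dpartial is (\<lambda>x. h x * f x) x) \<le> K"
    unfolding dpartial_mult[OF h schwartz_smooth[OF f]]
  proof (rule sum_list_bound)
    fix p assume "p \<in> set (splits is)"
    obtain K1 where K1: "\<And>x. norm (dpartial (fst p) h x) \<le> K1" using hb by blast
    obtain K2 where K2: "\<And>x. (1 + norm x) ^ k * norm (dpartial (snd p) f x) \<le> K2"
      using schwartz_bound[OF f] by blast
    have "(1 + norm x) ^ k * norm (dpartial (fst p) h x * dpartial (snd p) f x) \<le> K1 * K2" for x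
    proof -
      have "(1 + norm x) ^ k * norm (dpartial (fst p) h x * dpartial (snd p) f x)
          = norm (dpartial (fst p) h x) * ((1 + norm x) ^ k * norm (dpartial (snd p) f x))"
        by (simp add: norm_mult)
      also have "\<dots> \<le> K1 * K2"
        by (intro mult_mono K1 K2) (use K1[of x] norm_ge_zero[of "dpartial (fst p) h x"] in linarith, simp)
      finally show ?thesis .
    qed
    thus "\<exists>K. \<forall>x. (1 + norm x) ^ k * norm (dpartial (fst p) h x * dpartial (snd p) f x) \<le> K" by blast
  qed simp
qed

lemma schwartz_rescale:
  assumes g: "schwartz g" and e: "\<epsilon> > 0"
  shows "schwartz (rescale \<epsilon> g)"
proof (rule schwartz_boundI)
  show "smooth_fun (rescale \<epsilon> g)" using g by (simp add: smooth_rescale schwartz_smooth)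
  fix "is" k
  obtain K where K: "\<And>x. (1 + norm x) ^ k * norm (dpartial is g x) \<le> K"
    using schwartz_bound[OF g] by blast
  define c where "c = inverse \<epsilon>"
  have c: "c > 0" using e by (simp add: c_def)
  have "(1 + norm x) ^ k * norm (dpartial is (rescale \<epsilon> g) x) \<le> (1 + \<epsilon>) ^ k * c ^ length is * c ^ CARD('a) * K" for x :: "real^'a"
  proof -
    have n: "norm (c *\<^sub>R x) = c * norm x" using c by simp
    have "1 + norm x \<le> (1 + \<epsilon>) * (1 + norm (c *\<^sub>R x))"
      unfolding n using e c by (simp add: c_def field_simps)
    then have "(1 + norm x) ^ k \<le> ((1 + \<epsilon>) * (1 + norm (c *\<^sub>R x))) ^ k"
      by (intro power_mono) auto
    then have "(1 + norm x) ^ k * norm (dpartial is g (c *\<^sub>R x))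
        \<le> ((1 + \<epsilon>) * (1 + norm (c *\<^sub>R x))) ^ k * norm (dpartial is g (c *\<^sub>R x))"
      by (rule mult_right_mono) simp
    also have "\<dots> = (1 + \<epsilon>) ^ k * ((1 + norm (c *\<^sub>R x)) ^ k * norm (dpartial is g (c *\<^sub>R x)))"
      by (simp only: power_mult_distrib mult.assoc)
    also have "\<dots> \<le> (1 + \<epsilon>) ^ k * K" using K[of "c *\<^sub>R x"] e by (intro mult_left_mono) auto
    finally have *: "(1 + norm x) ^ k * norm (dpartial is g (c *\<^sub>R x)) \<le> (1 + \<epsilon>) ^ k * K" .
    have "(1 + norm x) ^ k * norm (dpartial is (rescale \<epsilon> g) x)
       = c ^ length is * c ^ CARD('a) * ((1 + norm x) ^ k * norm (dpartial is g (c *\<^sub>R x)))"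
      unfolding dpartial_rescale[OF schwartz_smooth[OF g]] using c
      by (simp add: rescale_def c_def norm_mult norm_power mult_ac norm_inverse)
    also have "\<dots> \<le> c ^ length is * c ^ CARD('a) * ((1 + \<epsilon>) ^ k * K)"
      using * c by (intro mult_left_mono) auto
    finally show ?thesis by (simp add: mult_ac)
  qed
  thus "\<exists>K. \<forall>x. (1 + norm x) ^ k * norm (dpartial is (rescale \<epsilon> g) x) \<le> K" by blast
qed



lemma nn_integral_scale:
  fixes f :: "'a::euclidean_space \<Rightarrow> ennreal"
  assumes [measurable]: "f \<in> borel_measurable borel" and c: "c \<noteq> 0"
  shows "(\<integral>\<^sup>+x. f x \<partial>lborel) = ennreal (\<bar>c\<bar> ^ DIM('a)) * (\<integral>\<^sup>+x. f (c *\<^sub>R x) \<partial>lborel)"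
  by (subst lborel_affine[OF c, of 0])
     (simp add: nn_integral_density nn_integral_distr nn_integral_cmult)

lemma integrable_scale:
  fixes f :: "'a::euclidean_space \<Rightarrow> 'b::{banach, second_countable_topology}"
  assumes f: "integrable lborel f" and c: "c \<noteq> 0"
  shows "integrable lborel (\<lambda>x. f (c *\<^sub>R x))"
proof -
  note m[measurable] = borel_measurable_integrable[OF f]
  have "(\<integral>\<^sup>+x. ennreal (norm (f x)) \<partial>lborel) < \<infinity>" using f unfolding integrable_iff_bounded by simp
  then have "ennreal (\<bar>c\<bar> ^ DIM('a)) * (\<integral>\<^sup>+x. ennreal (norm (f (c *\<^sub>R x))) \<partial>lborel) < \<infinity>"
    by (subst (asm) nn_integral_scale[OF _ c]) auto
  moreover have "ennreal (\<bar>c\<bar> ^ DIM('a)) \<noteq> 0" using c by simp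
  ultimately have "(\<integral>\<^sup>+x. ennreal (norm (f (c *\<^sub>R x))) \<partial>lborel) < \<infinity>"
    by (metis ennreal_mult_less_top infinity_ennreal_def top.not_eq_extremum ennreal_mult_eq_top_iff)
  then show ?thesis unfolding integrable_iff_bounded by simp
qed

lemma integral_scale:
  fixes f :: "'a::euclidean_space \<Rightarrow> 'b::{banach, second_countable_topology}"
  assumes c: "c \<noteq> 0"
  shows "(\<integral>x. f x \<partial>lborel) = \<bar>c\<bar> ^ DIM('a) *\<^sub>R (\<integral>x. f (c *\<^sub>R x) \<partial>lborel)"
proof cases
  assume f[measurable]: "integrable lborel f"
  then show ?thesis
    using c f f[THEN borel_measurable_integrable] integrable_scale[OF f c]
    by (subst lborel_affine[OF c, of 0]) (simp add: integral_density integral_distr)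
next
  assume nf: "\<not> integrable lborel f"
  have "\<not> integrable lborel (\<lambda>x. f (c *\<^sub>R x))"
  proof
    assume "integrable lborel (\<lambda>x. f (c *\<^sub>R x))"
    from integrable_scale[OF this, of "inverse c"] c have "integrable lborel f" by simp
    with nf show False by simp
  qed
  with nf show ?thesis by (simp add: not_integrable_integral_eq)
qed

lemma integrable_inv_sq: "integrable lborel (\<lambda>x::real. inverse (1 + x^2))"
proof -
  have "set_integrable lborel (einterval (-\<infinity>) \<infinity>) (\<lambda>x::real. inverse (1 + x^2))"
    by (rule integrable_inverse_1_plus_square)
  moreover have "einterval (-\<infinity>) \<infinity> = (UNIV :: real set)" by (auto simp: einterval_def)
  ultimately show ?thesis by (simp add: set_integrable_def)
qed

lemma integrable_prod_inv_sq:
  "integrable lborel (\<lambda>x::'a::euclidean_space. \<Prod>b\<in>Basis. inverse (1 + (x \<bullet> b)^2))"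
proof (rule integrableI_nonneg)
  show "(\<lambda>x::'a. \<Prod>b\<in>Basis. inverse (1 + (x \<bullet> b)^2)) \<in> borel_measurable lborel" by measurable
  show "AE x in lborel. 0 \<le> (\<Prod>b\<in>Basis. inverse (1 + (x \<bullet> b)^2))"
    by (intro AE_I2 prod_nonneg) (simp add: add_pos_nonneg)
  define I where "I = (\<integral>\<^sup>+x. ennreal (inverse (1 + x^2)) \<partial>lborel)"
  have I: "I < \<infinity>"
    unfolding I_def using integrable_inv_sq
    by (subst nn_integral_eq_integral) (auto simp: add_pos_nonneg)
  have "(\<integral>\<^sup>+x. ennreal (\<Prod>b\<in>Basis. inverse (1 + ((x::'a) \<bullet> b)^2)) \<partial>lborel)
      = (\<integral>\<^sup>+x. (\<Prod>b\<in>Basis. ennreal (inverse (1 + ((x::'a) \<bullet> b)^2))) \<partial>lborel)"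
    by (rule nn_integral_cong, rule prod_ennreal[symmetric]) (simp add: add_pos_nonneg)
  also have "\<dots> = (\<Prod>b\<in>(Basis::'a set). I)"
    unfolding I_def by (rule nn_integral_lborel_prod) auto
  also have "\<dots> < \<infinity>" using I by (simp add: power_less_top_ennreal)
  finally show "(\<integral>\<^sup>+x. ennreal (\<Prod>b\<in>Basis. inverse (1 + ((x::'a) \<bullet> b)^2)) \<partial>lborel) < \<infinity>" .
qed

lemma inv_pow_le_prod:
  fixes x :: "'a::euclidean_space"
  shows "inverse ((1 + norm x) ^ (2 * DIM('a))) \<le> (\<Prod>b\<in>Basis. inverse (1 + (x \<bullet> b)^2))"
proof -
  have "(\<Prod>b\<in>Basis. 1 + (x \<bullet> b)^2) \<le> (\<Prod>b\<in>(Basis::'a set). (1 + norm x)^2)"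
  proof (rule prod_mono)
    fix b :: 'a assume b: "b \<in> Basis"
    have "\<bar>x \<bullet> b\<bar> \<le> norm x" by (rule Basis_le_norm[OF b])
    then have "(x \<bullet> b)^2 \<le> (norm x)^2" by (metis abs_le_square_iff abs_norm_cancel)
    moreover have "(1 + norm x)^2 = 1 + 2 * norm x + (norm x)^2" by (simp add: power2_eq_square algebra_simps)
    moreover have "0 \<le> norm x" by simp
    moreover have "0 \<le> (x \<bullet> b)^2" by simp
    ultimately show "0 \<le> 1 + (x \<bullet> b)^2 \<and> 1 + (x \<bullet> b)^2 \<le> (1 + norm x)^2" by linarith
  qed
  also have "\<dots> = (1 + norm x) ^ (2 * DIM('a))" by (simp add: power_mult)
  finally have le: "(\<Prod>b\<in>Basis. 1 + (x \<bullet> b)^2) \<le> (1 + norm x) ^ (2 * DIM('a))" .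
  have pos: "0 < (\<Prod>b\<in>(Basis::'a set). 1 + (x \<bullet> b)^2)" by (intro prod_pos) (simp add: add_pos_nonneg)
  have "inverse ((1 + norm x) ^ (2 * DIM('a))) \<le> inverse (\<Prod>b\<in>Basis. 1 + (x \<bullet> b)^2)"
    by (rule le_imp_inverse_le[OF le pos])
  also have "\<dots> = (\<Prod>b\<in>Basis. inverse (1 + (x \<bullet> b)^2))"
    by (simp add: prod_inversef[symmetric] o_def)
  finally show ?thesis .
qed

lemma integrable_inv_pow:
  "integrable lborel (\<lambda>x::'a::euclidean_space. inverse ((1 + norm x) ^ (2 * DIM('a))))"
  by (rule Bochner_Integration.integrable_bound[OF integrable_prod_inv_sq]) (auto intro!: AE_I2 order_trans[OF inv_pow_le_prod abs_ge_self])

lemma schwartz_integrable_bound: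
  fixes g :: "real^'n::finite \<Rightarrow> complex" and F :: "real^'n \<Rightarrow> 'b::{banach,second_countable_topology}"
  assumes g: "schwartz g" and Fm: "F \<in> borel_measurable lborel"
    and Fb: "AE p in lborel. norm (F p) \<le> (1 + norm p) ^ n * norm (dpartial is g p)"
  shows "integrable lborel F"
proof -
  obtain K where K: "\<And>x. (1 + norm x) ^ (n + 2 * CARD('n)) * norm (dpartial is g x) \<le> K"
    using schwartz_bound[OF g] by blast
  have "integrable lborel (\<lambda>x::real^'n. K * inverse ((1 + norm x) ^ (2 * DIM(real^'n))))"
    by (intro integrable_mult_right integrable_inv_pow)
  then show ?thesis
  proof (rule Bochner_Integration.integrable_bound[OF _ Fm])
    show "AE x in lborel. norm (F x) \<le> norm (K * inverse ((1 + norm x) ^ (2 * DIM(real^'n))))"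
      using Fb
    proof eventually_elim
      case (elim x)
      have pos: "0 < (1 + norm x) ^ (2 * CARD('n))" by (intro zero_less_power) (simp add: add_pos_nonneg)
      have "(1 + norm x) ^ n * norm (dpartial is g x)
          = (1 + norm x) ^ (n + 2 * CARD('n)) * norm (dpartial is g x) * inverse ((1 + norm x) ^ (2 * CARD('n)))"
        using pos norm_ge_zero[of x] by (simp add: power_add field_simps add_nonneg_eq_0_iff)
      also have "\<dots> \<le> K * inverse ((1 + norm x) ^ (2 * CARD('n)))"
        using K[of x] pos by (intro mult_right_mono) auto
      finally have "norm (F x) \<le> K * inverse ((1 + norm x) ^ (2 * CARD('n)))" using elim by linarith
      then show ?case by simp
    qed
  qed
qed

lemma dpartial_measurable[measurable]:
  "smooth_fun g \<Longrightarrow> dpartial is g \<in> borel_measurable borel"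
  by (rule borel_measurable_continuous_onI[OF smooth_continuous])

lemma schwartz_integrable: "schwartz g \<Longrightarrow> integrable lborel g"
  by (rule schwartz_integrable_bound[of g g 0 "[]"])
     (auto simp: schwartz_smooth dpartial_measurable[of g "[]", simplified])

lemma schwartz_weighted_integrable:
  fixes g :: "real^'n::finite \<Rightarrow> complex"
  assumes g: "schwartz g" and a: "0 \<le> a"
  shows "integrable lborel (\<lambda>p. norm p powr a * norm (dpartial is g p))"
proof (rule schwartz_integrable_bound[OF g, of _ "nat \<lceil>a\<rceil>" "is"])
  show "(\<lambda>p. norm p powr a * norm (dpartial is g p)) \<in> borel_measurable lborel"
    using schwartz_smooth[OF g] by measurable
  show "AE p in lborel. norm (norm p powr a * norm (dpartial is g p)) \<le> (1 + norm p) ^ nat \<lceil>a\<rceil> * norm (dpartial is g p)"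
  proof (intro AE_I2)
    fix p :: "real^'n"
    have "norm p powr a \<le> (1 + norm p) powr a" by (intro powr_mono2 a) auto
    also have "\<dots> \<le> (1 + norm p) powr (nat \<lceil>a\<rceil>)" by (intro powr_mono) (auto simp: real_nat_ceiling_ge)
    also have "\<dots> = (1 + norm p) ^ nat \<lceil>a\<rceil>" by (simp add: powr_realpow add_pos_nonneg)
    finally have "norm p powr a \<le> (1 + norm p) ^ nat \<lceil>a\<rceil>" .
    then show "norm (norm p powr a * norm (dpartial is g p)) \<le> (1 + norm p) ^ nat \<lceil>a\<rceil> * norm (dpartial is g p)"
      by (simp add: mult_right_mono)
  qed
qed



lemma count_list_replicate': "count_list (replicate n x) y = (if x = y then n else 0)"
  by (induction n) auto

lemma mlist_count: "count_list (mlist (\<alpha> :: 'n::finite \<Rightarrow> nat)) i = \<alpha> i"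
proof -
  obtain xs :: "'n list" where xs: "set xs = UNIV" "distinct xs"
    using finite_distinct_list[of "UNIV :: 'n set"] by auto
  define ys where "ys = concat (map (\<lambda>j. replicate (\<alpha> j) j) xs)"
  have "count_list ys i = (if i \<in> set xs then \<alpha> i else 0)" for i unfolding ys_def using xs(2)
    by (induction xs) (auto simp: count_list_append count_list_replicate')
  with xs have "\<forall>i. count_list ys i = \<alpha> i" by simp
  then have "\<exists>ys. \<forall>i. count_list ys i = \<alpha> i" by blast
  then show ?thesis unfolding mlist_def by (rule someI_ex[where P="\<lambda>ys. \<forall>i. count_list ys i = \<alpha> i", THEN spec])
qed

lemma length_mlist: "length (mlist (\<alpha> :: 'n::finite \<Rightarrow> nat)) = mabs \<alpha>"
  using sum_count_set[of "mlist \<alpha>" "UNIV :: 'n set"] by (simp add: mabs_def mlist_count)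

lemma finite_bound_choice:
  assumes "finite S" and "\<And>s. s \<in> S \<Longrightarrow> \<exists>K. P s K" and mono: "\<And>s K K'. P s K \<Longrightarrow> K \<le> K' \<Longrightarrow> P s K'"
  shows "\<exists>K::real. \<forall>s\<in>S. P s K"
  using assms(1,2)
proof (induction S rule: finite_induct)
  case empty thus ?case by simp
next
  case (insert s S)
  obtain K1 where K1: "\<forall>s\<in>S. P s K1" using insert by auto
  obtain K2 where K2: "P s K2" using insert by auto
  have "\<forall>s'\<in>insert s S. P s' (max K1 K2)" using K1 K2 mono by (auto intro: max.cobounded1 max.cobounded2)
  thus ?case by blast
qed

definition semiset :: "nat \<Rightarrow> (real^'n::finite \<Rightarrow> complex) \<Rightarrow> real set" where
  "semiset m f = (\<lambda>(x, is, k). (1 + norm x) ^ k * norm (dpartial is f x)) ` {(x, is, k). length is \<le> m \<and> k \<le> m}"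

lemma seminorm_semiset: "schwartz_seminorm m f = Sup (semiset m f)"
  by (simp add: schwartz_seminorm_def semiset_def)

lemma finite_islk: "finite {(is :: 'n::finite list, k::nat). length is \<le> m \<and> k \<le> m}"
proof -
  have "{(is :: 'n list, k::nat). length is \<le> m \<and> k \<le> m} \<subseteq> {xs. set xs \<subseteq> UNIV \<and> length xs \<le> m} \<times> {..m}"
    by auto
  moreover have "finite ({xs :: 'n list. set xs \<subseteq> UNIV \<and> length xs \<le> m} \<times> {..m})"
    by (intro finite_cartesian_product finite_lists_length_le) auto
  ultimately show ?thesis by (rule finite_subset)
qed

lemma semiset_bound:
  assumes "schwartz f"
  shows "\<exists>K. \<forall>y\<in>semiset m f. y \<le> K"
proof -
  have "\<exists>K::real. \<forall>s\<in>{(is :: 'a list, k::nat). length is \<le> m \<and> k \<le> m}.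
      (\<forall>x. (1 + norm x) ^ snd s * norm (dpartial (fst s) f x) \<le> K)"
    by (rule finite_bound_choice[OF finite_islk]) (use schwartz_bound[OF assms] in \<open>auto intro: order_trans\<close>)
  then obtain K where K: "\<forall>s\<in>{(is :: 'a list, k::nat). length is \<le> m \<and> k \<le> m}.
      (\<forall>x. (1 + norm x) ^ snd s * norm (dpartial (fst s) f x) \<le> K)" by blast
  show ?thesis by (rule exI[of _ K]) (use K in \<open>auto simp: semiset_def\<close>)
qed

lemma semiset_mem: "length is \<le> m \<Longrightarrow> k \<le> m \<Longrightarrow> (1 + norm x) ^ k * norm (dpartial is f x) \<in> semiset m f"
  unfolding semiset_def by (rule image_eqI[of _ _ "(x, is, k)"]) auto

lemma seminorm_upper:
  assumes "schwartz f" "length is \<le> m" "k \<le> m"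
  shows "(1 + norm x) ^ k * norm (dpartial is f x) \<le> schwartz_seminorm m f"
  unfolding seminorm_semiset
  by (rule cSup_upper[OF semiset_mem[OF assms(2,3)]]) (use semiset_bound[OF assms(1), of m] in \<open>auto simp: bdd_above_def\<close>)

lemma seminorm_nonneg: "schwartz f \<Longrightarrow> 0 \<le> schwartz_seminorm m f"
  using seminorm_upper[of f "[]" m 0 0] by (auto intro: order_trans[OF norm_ge_zero])

lemma seminorm_mono:
  assumes "schwartz f" "m \<le> m'"
  shows "schwartz_seminorm m f \<le> schwartz_seminorm m' f"
  unfolding seminorm_semiset
proof (rule cSup_subset_mono)
  show "semiset m f \<noteq> {}" using semiset_mem[of "[]" m 0 0 f] by auto
  show "bdd_above (semiset m' f)" using semiset_bound[OF assms(1), of m'] by (auto simp: bdd_above_def)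
  show "semiset m f \<subseteq> semiset m' f" unfolding semiset_def using assms(2) by (intro image_mono) auto
qed

lemma seminorm_le:
  assumes "\<And>x is k. length is \<le> m \<Longrightarrow> k \<le> m \<Longrightarrow> (1 + norm x) ^ k * norm (dpartial is f x) \<le> B"
  shows "schwartz_seminorm m f \<le> B"
proof -
  have "semiset m f \<noteq> {}" using semiset_mem[of "[]" m 0 0 f] by auto
  then show ?thesis unfolding seminorm_semiset
    by (rule cSup_least) (use assms in \<open>auto simp: semiset_def\<close>)
qed

lemma schwartz_add: "schwartz f \<Longrightarrow> schwartz g \<Longrightarrow> schwartz (\<lambda>x. f x + g x)"
proof (rule schwartz_boundI)
  assume f: "schwartz f" and g: "schwartz g"
  show "smooth_fun (\<lambda>x. f x + g x)" using f g by (simp add: smooth_add schwartz_smooth)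
  fix "is" k
  obtain K1 where K1: "\<And>x. (1 + norm x) ^ k * norm (dpartial is f x) \<le> K1" using schwartz_bound[OF f] by blast
  obtain K2 where K2: "\<And>x. (1 + norm x) ^ k * norm (dpartial is g x) \<le> K2" using schwartz_bound[OF g] by blast
  have "(1 + norm x) ^ k * norm (dpartial is (\<lambda>x. f x + g x) x) \<le> K1 + K2" for x
  proof -
    have "(1 + norm x) ^ k * norm (dpartial is (\<lambda>x. f x + g x) x)
       \<le> (1 + norm x) ^ k * (norm (dpartial is f x) + norm (dpartial is g x))"
      unfolding dpartial_add[OF schwartz_smooth[OF f] schwartz_smooth[OF g]]
      by (intro mult_left_mono norm_triangle_ineq) auto
    also have "\<dots> \<le> K1 + K2" using K1[of x] K2[of x] by (simp add: distrib_left)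
    finally show ?thesis .
  qed
  thus "\<exists>K. \<forall>x. (1 + norm x) ^ k * norm (dpartial is (\<lambda>x. f x + g x) x) \<le> K" by blast
qed

lemma schwartz_cmult:
  assumes f: "schwartz f" shows "schwartz (\<lambda>x. c * f x)"
proof -
  have "\<exists>K. \<forall>x. norm (dpartial is (\<lambda>_. c) x) \<le> K" for "is"
    by (rule exI[of _ "norm c"]) (simp add: dpartial_const)
  from schwartz_mult[OF smooth_const this f] show ?thesis .
qed

lemma tempered_linear:
  assumes "tempered T"
  shows "schwartz f \<Longrightarrow> schwartz g \<Longrightarrow> T (\<lambda>x. f x + g x) = T f + T g"
    and "schwartz f \<Longrightarrow> T (\<lambda>x. a * f x) = a * T f"
  using assms unfolding tempered_def by auto

lemma tempered_bound:
  assumes "tempered T"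
  shows "\<exists>C m. C \<ge> 0 \<and> (\<forall>f. schwartz f \<longrightarrow> norm (T f) \<le> C * schwartz_seminorm m f)"
proof -
  obtain C m where Cm: "\<forall>f. schwartz f \<longrightarrow> norm (T f) \<le> C * schwartz_seminorm m f"
    using assms unfolding tempered_def by blast
  have "norm (T f) \<le> max C 0 * schwartz_seminorm m f" if "schwartz f" for f
    using Cm that seminorm_nonneg[OF that, of m] by (smt (verit) mult_right_mono max.cobounded1)
  thus ?thesis by (intro exI[of _ "max C 0"] exI[of _ m]) auto
qed

lemma fun_dist_one_tempered: "tempered (fun_dist (\<lambda>_. 1) :: (real^'n::finite \<Rightarrow> complex) \<Rightarrow> complex)"
  unfolding tempered_def
proof (intro conjI allI impI)
  fix f g :: "real^'n \<Rightarrow> complex" assume "schwartz f \<and> schwartz g"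
  then show "fun_dist (\<lambda>_. 1) (\<lambda>x. f x + g x) = fun_dist (\<lambda>_. 1) f + fun_dist (\<lambda>_. 1) g"
    by (simp add: fun_dist_def schwartz_integrable distrib_left)
next
  fix f :: "real^'n \<Rightarrow> complex" and a :: complex assume "schwartz f"
  then show "fun_dist (\<lambda>_. 1) (\<lambda>x. a * f x) = a * fun_dist (\<lambda>_. 1) f"
    by (simp add: fun_dist_def)
next
  define W where "W = (\<lambda>x::real^'n. inverse ((1 + norm x) ^ (2 * CARD('n))))"
  have Wi: "integrable lborel W" unfolding W_def using integrable_inv_pow[where 'a="real^'n"] by simp
  have Wpos: "0 < (1 + norm x) ^ (2 * CARD('n))" for x :: "real^'n"
    by (intro zero_less_power) (simp add: add_pos_nonneg)
  show "\<exists>C m. \<forall>f. schwartz f \<longrightarrow> norm (fun_dist (\<lambda>_. 1) f) \<le> C * schwartz_seminorm m (f :: real^'n \<Rightarrow> complex)"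
  proof (intro exI allI impI)
    fix f :: "real^'n \<Rightarrow> complex" assume f: "schwartz f"
    let ?S = "schwartz_seminorm (2 * CARD('n)) f"
    have pt: "norm (f x) \<le> ?S * W x" for x
    proof -
      have "(1 + norm x) ^ (2 * CARD('n)) * norm (dpartial [] f x) \<le> ?S"
        by (rule seminorm_upper[OF f]) auto
      then show ?thesis unfolding W_def using Wpos[of x] by (simp add: field_simps)
    qed
    have "norm (fun_dist (\<lambda>_. 1) f) = norm (normc TYPE('n)) * norm (LINT q|lborel. f q)"
      by (simp add: fun_dist_def norm_mult)
    also have "\<dots> \<le> norm (normc TYPE('n)) * (LINT q|lborel. ?S * W q)"
    proof (intro mult_left_mono order_trans[OF integral_norm_bound] integral_mono')
      show "integrable lborel (\<lambda>q. ?S * W q)" by (intro integrable_mult_right Wi)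
      show "0 \<le> ?S * W q" for q using seminorm_nonneg[OF f] Wpos[of q] unfolding W_def by simp
    qed (use pt in auto)
    also have "\<dots> = (norm (normc TYPE('n)) * (LINT q|lborel. W q)) * ?S" by simp
    finally show "norm (fun_dist (\<lambda>_. 1) f) \<le> (norm (normc TYPE('n)) * (LINT q|lborel. W q)) * ?S" .
  qed
qed

lemma tempered_diff:
  assumes T1: "tempered T1" and T2: "tempered T2"
  shows "tempered (\<lambda>\<phi>. T1 \<phi> - c * T2 \<phi>)"
  unfolding tempered_def
proof (intro conjI allI impI)
  fix f g :: "real^'a \<Rightarrow> complex" assume "schwartz f \<and> schwartz g"
  then show "T1 (\<lambda>x. f x + g x) - c * T2 (\<lambda>x. f x + g x) = T1 f - c * T2 f + (T1 g - c * T2 g)"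
    using tempered_linear(1)[OF T1] tempered_linear(1)[OF T2] by (simp add: algebra_simps)
next
  fix f :: "real^'a \<Rightarrow> complex" and a :: complex assume "schwartz f"
  then show "T1 (\<lambda>x. a * f x) - c * T2 (\<lambda>x. a * f x) = a * (T1 f - c * T2 f)"
    using tempered_linear(2)[OF T1] tempered_linear(2)[OF T2] by (simp add: algebra_simps)
next
  obtain C1 m1 where C1: "C1 \<ge> 0" "\<forall>f. schwartz f \<longrightarrow> norm (T1 f) \<le> C1 * schwartz_seminorm m1 f"
    using tempered_bound[OF T1] by blast
  obtain C2 m2 where C2: "C2 \<ge> 0" "\<forall>f. schwartz f \<longrightarrow> norm (T2 f) \<le> C2 * schwartz_seminorm m2 f"
    using tempered_bound[OF T2] by blast
  show "\<exists>C m. \<forall>f. schwartz f \<longrightarrow> norm (T1 f - c * T2 f) \<le> C * schwartz_seminorm m (f :: real^'a \<Rightarrow> complex)"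
  proof (intro exI allI impI)
    fix f :: "real^'a \<Rightarrow> complex" assume f: "schwartz f"
    have s1: "schwartz_seminorm m1 f \<le> schwartz_seminorm (max m1 m2) f" by (rule seminorm_mono[OF f]) simp
    have s2: "schwartz_seminorm m2 f \<le> schwartz_seminorm (max m1 m2) f" by (rule seminorm_mono[OF f]) simp
    have "norm (T1 f - c * T2 f) \<le> norm (T1 f) + norm c * norm (T2 f)"
      by (metis norm_mult norm_triangle_ineq4)
    also have "\<dots> \<le> C1 * schwartz_seminorm (max m1 m2) f + norm c * (C2 * schwartz_seminorm (max m1 m2) f)"
    proof (rule add_mono)
      have "norm (T1 f) \<le> C1 * schwartz_seminorm m1 f" using C1(2) f by blast
      also have "\<dots> \<le> C1 * schwartz_seminorm (max m1 m2) f" by (rule mult_left_mono[OF s1 C1(1)])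
      finally show "norm (T1 f) \<le> C1 * schwartz_seminorm (max m1 m2) f" .
      have "norm (T2 f) \<le> C2 * schwartz_seminorm m2 f" using C2(2) f by blast
      also have "\<dots> \<le> C2 * schwartz_seminorm (max m1 m2) f" by (rule mult_left_mono[OF s2 C2(1)])
      finally show "norm c * norm (T2 f) \<le> norm c * (C2 * schwartz_seminorm (max m1 m2) f)"
        by (rule mult_left_mono) simp
    qed
    also have "\<dots> = (C1 + norm c * C2) * schwartz_seminorm (max m1 m2) f" by (simp add: algebra_simps)
    finally show "norm (T1 f - c * T2 f) \<le> (C1 + norm c * C2) * schwartz_seminorm (max m1 m2) f" .
  qed
qed



lemma integrable_sum_list:
  "(\<And>c. c \<in> set cs \<Longrightarrow> integrable M (F c)) \<Longrightarrow> integrable M (\<lambda>x. \<Sum>c\<leftarrow>cs. F c x :: 'b::{banach,second_countable_topology})"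
  by (induction cs) auto

lemma sum_list_nonneg':
  "(\<And>c. c \<in> set cs \<Longrightarrow> 0 \<le> F c) \<Longrightarrow> 0 \<le> (\<Sum>c\<leftarrow>cs. F c :: real)"
  by (induction cs) auto

lemma scalar_term1:
  fixes q :: "'a::real_normed_vector"
  assumes e: "0 < \<epsilon>" "\<epsilon> \<le> 1" and mb: "mb \<le> L" and a: "a = \<delta> + real L" "0 \<le> a"
  shows "norm q powr a * inverse \<epsilon> ^ mb \<le> \<epsilon> powr \<delta> * norm (inverse \<epsilon> *\<^sub>R q) powr a"
proof -
  have c: "0 < inverse \<epsilon>" using e by simp
  have "norm (inverse \<epsilon> *\<^sub>R q) powr a = inverse \<epsilon> powr a * norm q powr a"
    using c by (simp add: powr_mult)
  also have "inverse \<epsilon> powr a = \<epsilon> powr (- a)" using e by (simp add: powr_minus inverse_powr)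
  finally have eq: "\<epsilon> powr \<delta> * norm (inverse \<epsilon> *\<^sub>R q) powr a = \<epsilon> powr (- real L) * norm q powr a"
    using e a by (simp add: powr_add[symmetric])
  have "inverse \<epsilon> ^ mb = \<epsilon> powr (- real mb)" using e by (simp add: powr_minus powr_realpow power_inverse)
  also have "\<dots> \<le> \<epsilon> powr (- real L)" using e mb by (intro powr_mono') auto
  finally have "inverse \<epsilon> ^ mb \<le> \<epsilon> powr (- real L)" .
  then have "norm q powr a * inverse \<epsilon> ^ mb \<le> norm q powr a * \<epsilon> powr (- real L)"
    by (intro mult_left_mono) auto
  with eq show ?thesis by (simp add: mult.commute)
qed

lemma term1_bound:
  fixes t cf g :: "real^'n::finite \<Rightarrow> complex"
  assumes U: "cball 0 r \<subseteq> U"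
    and tb: "\<forall>q\<in>U. q \<noteq> 0 \<longrightarrow> norm (t q) \<le> C * norm q powr (\<delta> + real (length js))"
    and tz: "\<delta> + real (length js) < 0 \<longrightarrow> (\<forall>q\<in>U. t q = 0)"
    and cf: "smooth_fun cf" "\<forall>x. r \<le> norm x \<longrightarrow> cf x = 0"
    and KC: "\<forall>is x. norm (dpartial is cf x) \<le> KC is"
    and g: "schwartz g"
  shows "\<exists>K. \<forall>\<epsilon>. 0 < \<epsilon> \<and> \<epsilon> \<le> 1 \<longrightarrow>
     norm (LINT q|lborel. t q * dpartial js (\<lambda>x. cf x * rescale \<epsilon> g x) q) \<le> K * \<epsilon> powr \<delta>"
proof -
  define a where "a = \<delta> + real (length js)"
  have gs: "smooth_fun g" using g by (rule schwartz_smooth)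
  have o: "open {x::real^'n. r < norm x}" by (intro open_Collect_less continuous_intros)
  have outside: "dpartial js (\<lambda>x. cf x * rescale \<epsilon> g x) q = 0" if "q \<notin> U" for \<epsilon> q
  proof -
    have "r < norm q" using that U by (auto simp: subset_iff dist_norm) (meson not_le)
    then show ?thesis by (intro dpartial_zero_open[OF o]) (use cf in auto)
  qed
  show ?thesis
  proof (cases "a < 0")
    case True
    have "t q * dpartial js (\<lambda>x. cf x * rescale \<epsilon> g x) q = 0" for \<epsilon> q
      using tz True outside[of q \<epsilon>] unfolding a_def by (cases "q \<in> U") auto
    then have z: "(\<lambda>q. t q * dpartial js (\<lambda>x. cf x * rescale \<epsilon> g x) q) = (\<lambda>q. 0)" for \<epsilon> by auto
    show ?thesis by (intro exI[of _ 0] allI impI) (simp only: z, simp)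
  next
    case False
    then have a0: "0 \<le> a" by simp
    have KC0: "0 \<le> KC is" for "is" using KC norm_ge_zero order_trans by blast
    define C' where "C' = max C 0"
    define \<Psi> where "\<Psi> = (\<lambda>y. \<Sum>p\<leftarrow>splits js. KC (fst p) * (norm y powr a * norm (dpartial (snd p) g y)))"
    have \<Psi>i: "integrable lborel \<Psi>" unfolding \<Psi>_def
      by (intro integrable_sum_list integrable_mult_right schwartz_weighted_integrable[OF g a0])
    have \<Psi>0: "0 \<le> \<Psi> y" for y unfolding \<Psi>_def by (intro sum_list_nonneg') (simp add: KC0)
    show ?thesis
    proof (intro exI[of _ "C' * (LINT y|lborel. \<Psi> y)"] allI impI)
      fix \<epsilon> :: real assume e: "0 < \<epsilon> \<and> \<epsilon> \<le> 1"
      define c where "c = inverse \<epsilon>"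
      have c0: "0 < c" using e by (simp add: c_def)
      define B where "B = (\<lambda>q::real^'n. C' * \<epsilon> powr \<delta> * (c ^ CARD('n) * \<Psi> (c *\<^sub>R q)))"
      have Bi: "integrable lborel B" unfolding B_def
        by (intro integrable_mult_right integrable_scale[OF \<Psi>i]) (use c0 in simp)
      have B0: "0 \<le> B q" for q unfolding B_def C'_def using \<Psi>0 c0 by simp
      have pt: "norm (t q * dpartial js (\<lambda>x. cf x * rescale \<epsilon> g x) q) \<le> B q" if q0: "q \<noteq> 0" for q
      proof (cases "q \<in> U")
        case False thus ?thesis using outside[OF False] B0 by simp
      next
        case True
        define y where "y = c *\<^sub>R q"
        have tq: "norm (t q) \<le> C' * norm q powr a"
          using tb True q0 unfolding a_def C'_def by (smt (verit) max.cobounded1 mult_right_mono powr_ge_zero)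
        have dexp: "dpartial js (\<lambda>x. cf x * rescale \<epsilon> g x) q =
           (\<Sum>p\<leftarrow>splits js. dpartial (fst p) cf q * (of_real c ^ length (snd p) *
                 (of_real (c ^ CARD('n)) * dpartial (snd p) g y)))"
          unfolding dpartial_mult[OF cf(1) smooth_rescale[OF gs]] dpartial_rescale[OF gs]
          by (simp add: rescale_def c_def y_def)
        have "norm (t q * dpartial js (\<lambda>x. cf x * rescale \<epsilon> g x) q)
            \<le> (C' * norm q powr a) * (\<Sum>p\<leftarrow>splits js. norm (dpartial (fst p) cf q * (of_real c ^ length (snd p) *
                 (of_real (c ^ CARD('n)) * dpartial (snd p) g y))))"
          unfolding norm_mult[of "t q"] dexp
          by (intro mult_mono tq norm_sum_list_le) (auto simp: C'_def)
        also have "\<dots> = (\<Sum>p\<leftarrow>splits js. (C' * norm q powr a) * norm (dpartial (fst p) cf q * (of_real c ^ length (snd p) *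
                 (of_real (c ^ CARD('n)) * dpartial (snd p) g y))))"
          by (rule sum_list_const_mult[symmetric])
        also have "\<dots> \<le> (\<Sum>p\<leftarrow>splits js. C' * \<epsilon> powr \<delta> * c ^ CARD('n) *
                 (KC (fst p) * (norm y powr a * norm (dpartial (snd p) g y))))"
        proof (rule sum_list_mono)
          fix p assume p: "p \<in> set (splits js)"
          have lb: "length (snd p) \<le> length js" using splits_length[OF p] by simp
          have sc: "norm q powr a * c ^ length (snd p) \<le> \<epsilon> powr \<delta> * norm y powr a"
            unfolding c_def y_def by (rule scalar_term1[OF _ _ lb]) (use e a0 a_def in auto)
          have "(C' * norm q powr a) * norm (dpartial (fst p) cf q * (of_real c ^ length (snd p) *
                 (of_real (c ^ CARD('n)) * dpartial (snd p) g y)))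
             = C' * c ^ CARD('n) * norm (dpartial (fst p) cf q) * norm (dpartial (snd p) g y) * (norm q powr a * c ^ length (snd p))"
            using c0 by (simp add: norm_mult norm_power mult_ac)
          also have "\<dots> \<le> C' * c ^ CARD('n) * KC (fst p) * norm (dpartial (snd p) g y) * (\<epsilon> powr \<delta> * norm y powr a)"
          proof (rule mult_mono[OF mult_right_mono[OF mult_left_mono] sc])
            show "norm (dpartial (fst p) cf q) \<le> KC (fst p)" using KC by blast
            show "0 \<le> C' * c ^ CARD('n)" using c0 by (simp add: C'_def)
          qed (use c0 KC0[of "fst p"] in \<open>auto simp: C'_def intro!: mult_nonneg_nonneg\<close>)
          also have "\<dots> = C' * \<epsilon> powr \<delta> * c ^ CARD('n) * (KC (fst p) * (norm y powr a * norm (dpartial (snd p) g y)))"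
            by (simp add: mult_ac)
          finally show "(C' * norm q powr a) * norm (dpartial (fst p) cf q * (of_real c ^ length (snd p) *
                 (of_real (c ^ CARD('n)) * dpartial (snd p) g y))) \<le> C' * \<epsilon> powr \<delta> * c ^ CARD('n) *
                 (KC (fst p) * (norm y powr a * norm (dpartial (snd p) g y)))" .
        qed
        also have "\<dots> = B q" unfolding B_def \<Psi>_def y_def
          by (subst sum_list_const_mult) (simp add: mult_ac)
        finally show ?thesis .
      qed
      have "norm (LINT q|lborel. t q * dpartial js (\<lambda>x. cf x * rescale \<epsilon> g x) q)
          \<le> (LINT q|lborel. norm (t q * dpartial js (\<lambda>x. cf x * rescale \<epsilon> g x) q))"
        by (rule integral_norm_bound)
      also have "\<dots> \<le> (LINT q|lborel. B q)"
        by (rule integral_mono_AE'[OF Bi]) (use pt B0 AE_lborel_singleton[of 0] in \<open>auto elim!: AE_mp\<close>)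
      also have "(LINT q|lborel. B q) = C' * \<epsilon> powr \<delta> * (c ^ CARD('n) * (LINT q|lborel. \<Psi> (c *\<^sub>R q)))"
        unfolding B_def by simp
      also have "c ^ CARD('n) * (LINT q|lborel. \<Psi> (c *\<^sub>R q)) = (LINT y|lborel. \<Psi> y)"
        using integral_scale[of c \<Psi>] c0 by simp
      finally show "norm (LINT q|lborel. t q * dpartial js (\<lambda>x. cf x * rescale \<epsilon> g x) q)
          \<le> C' * (LINT y|lborel. \<Psi> y) * \<epsilon> powr \<delta>" by (simp add: mult_ac)
    qed
  qed
qed



lemma scalar_term2:
  fixes x :: "'a::real_normed_vector"
  assumes e: "0 < \<epsilon>" "\<epsilon> \<le> 1" and rho: "0 < \<rho>" "\<rho> \<le> norm x"
    and G: "0 \<le> G" "(1 + norm (inverse \<epsilon> *\<^sub>R x)) ^ (k + (m + n0)) * G \<le> KG"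
  shows "(1 + norm x) ^ k * inverse \<epsilon> ^ m * G \<le> \<epsilon> ^ n0 * (KG / \<rho> ^ (m + n0))"
proof -
  define c where "c = inverse \<epsilon>"
  define y where "y = c *\<^sub>R x"
  define L where "L = m + n0"
  have c0: "0 < c" "1 \<le> c" using e by (auto simp: c_def one_le_inverse)
  have ny: "norm y = c * norm x" using c0 by (simp add: y_def)
  have cm: "c ^ m = \<epsilon> ^ n0 * c ^ L"
    using e by (simp add: L_def c_def power_add power_inverse field_simps)
  have x1: "(1 + norm x) ^ k \<le> (1 + norm y) ^ k"
    using c0 by (intro power_mono) (auto simp: ny intro: order_trans[OF _ mult_right_mono[of 1 c]])
  have "c * \<rho> \<le> norm y" unfolding ny using c0 rho by (intro mult_left_mono) auto
  then have "c \<le> (1 + norm y) / \<rho>" using rho by (simp add: field_simps)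
  then have cL: "c ^ L \<le> ((1 + norm y) / \<rho>) ^ L" using c0 by (intro power_mono) auto
  have "(1 + norm x) ^ k * c ^ L * G \<le> (1 + norm y) ^ k * ((1 + norm y) / \<rho>) ^ L * G"
    using c0 G(1) by (intro mult_right_mono mult_mono x1 cL) auto
  also have "\<dots> = (1 + norm y) ^ (k + L) * G / \<rho> ^ L" by (simp add: power_add power_divide)
  also have "\<dots> \<le> KG / \<rho> ^ L" using G(2) rho unfolding y_def c_def L_def by (intro divide_right_mono) auto
  finally have *: "(1 + norm x) ^ k * c ^ L * G \<le> KG / \<rho> ^ L" .
  have "(1 + norm x) ^ k * c ^ m * G = \<epsilon> ^ n0 * ((1 + norm x) ^ k * c ^ L * G)" by (simp add: cm mult_ac)
  also have "\<dots> \<le> \<epsilon> ^ n0 * (KG / \<rho> ^ L)" using * e by (intro mult_left_mono) auto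
  finally show ?thesis by (simp add: c_def L_def)
qed

lemma term2_bound:
  fixes cf g :: "real^'n::finite \<Rightarrow> complex"
  assumes cf: "smooth_fun cf" "\<forall>x. norm x < \<rho> \<longrightarrow> cf x = 1" and rho: "0 < \<rho>"
    and KC: "\<forall>is x. norm (dpartial is cf x) \<le> KC is" and g: "schwartz g"
  shows "\<exists>K. \<forall>\<epsilon>. 0 < \<epsilon> \<and> \<epsilon> \<le> 1 \<longrightarrow> schwartz_seminorm m (\<lambda>x. (1 - cf x) * rescale \<epsilon> g x) \<le> K * \<epsilon> powr \<delta>"
proof -
  define h where "h = (\<lambda>x::real^'n. 1 - cf x)"
  have gs: "smooth_fun g" using g by (rule schwartz_smooth)
  have hs: "smooth_fun h" unfolding h_def by (intro smooth_minus smooth_const cf)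
  have KC0: "0 \<le> KC is" for "is" using KC norm_ge_zero order_trans by blast
  have KH: "norm (dpartial is h x) \<le> 1 + KC is" for "is" x
  proof -
    have "norm (dpartial is h x) = norm (dpartial is (\<lambda>_. 1) x - dpartial is cf x)"
      unfolding h_def dpartial_minus[OF smooth_const cf(1)] by simp
    also have "\<dots> \<le> norm (dpartial is (\<lambda>_. 1::complex) x) + norm (dpartial is cf x)" by (rule norm_triangle_ineq4)
    also have "\<dots> \<le> 1 + KC is" using KC by (intro add_mono) (auto simp: dpartial_const)
    finally show ?thesis .
  qed
  have "\<forall>bk::('n list \<times> nat). \<exists>K. \<forall>y. (1 + norm y) ^ snd bk * norm (dpartial (fst bk) g y) \<le> K"
    using schwartz_bound[OF g] by blast
  then obtain Kg' where Kg': "\<forall>bk::('n list \<times> nat). \<forall>y. (1 + norm y) ^ snd bk * norm (dpartial (fst bk) g y) \<le> Kg' bk"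
    by (metis choice)
  define Kg where "Kg = (\<lambda>b k. Kg' (b, k))"
  have Kg: "(1 + norm y) ^ k * norm (dpartial b g y) \<le> Kg b k" for b k y using Kg' unfolding Kg_def by auto
  have Kg0: "0 \<le> Kg b k" for b k using Kg[where k=k and b=b and y=0] by (smt (verit) mult_nonneg_nonneg norm_ge_zero zero_le_power)
  define n0 where "n0 = nat \<lceil>\<delta>\<rceil>"
  have en: "\<epsilon> ^ n0 \<le> \<epsilon> powr \<delta>" if "0 < \<epsilon>" "\<epsilon> \<le> 1" for \<epsilon>
  proof -
    have "\<epsilon> ^ n0 = \<epsilon> powr (real n0)" using that by (simp add: powr_realpow)
    also have "\<dots> \<le> \<epsilon> powr \<delta>" using that by (intro powr_mono') (auto simp: n0_def real_nat_ceiling_ge)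
    finally show ?thesis .
  qed
  have o: "open {x::real^'n. norm x < \<rho>}" by (intro open_Collect_less continuous_intros)
  have one: "\<exists>K. \<forall>\<epsilon> x. 0 < \<epsilon> \<and> \<epsilon> \<le> 1 \<longrightarrow>
      (1 + norm x) ^ k * norm (dpartial is (\<lambda>x. h x * rescale \<epsilon> g x) x) \<le> K * \<epsilon> powr \<delta>" for "is" k
  proof -
    define L where "L = (\<lambda>p::'n list \<times> 'n list. length (snd p) + CARD('n) + n0)"
    define K where "K = (\<Sum>p\<leftarrow>splits is. (1 + KC (fst p)) * (Kg (snd p) (k + L p) / \<rho> ^ L p))"
    have K0: "0 \<le> K" unfolding K_def using rho by (intro sum_list_nonneg') (auto simp: KC0 Kg0 add_nonneg_nonneg)
    show ?thesis
    proof (intro exI[of _ K] allI impI)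
      fix \<epsilon> :: real and x :: "real^'n" assume e: "0 < \<epsilon> \<and> \<epsilon> \<le> 1"
      define c where "c = inverse \<epsilon>"
      have c0: "0 < c" using e by (simp add: c_def)
      show "(1 + norm x) ^ k * norm (dpartial is (\<lambda>x. h x * rescale \<epsilon> g x) x) \<le> K * \<epsilon> powr \<delta>"
      proof (cases "norm x < \<rho>")
        case True
        have "dpartial is (\<lambda>x. h x * rescale \<epsilon> g x) x = 0"
          by (rule dpartial_zero_open[OF o]) (use True cf in \<open>auto simp: h_def\<close>)
        then show ?thesis using K0 e by simp
      next
        case False
        then have xr: "\<rho> \<le> norm x" by simp
        have dexp: "dpartial is (\<lambda>x. h x * rescale \<epsilon> g x) x =
           (\<Sum>p\<leftarrow>splits is. dpartial (fst p) h x * (of_real c ^ length (snd p) *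
                 (of_real (c ^ CARD('n)) * dpartial (snd p) g (c *\<^sub>R x))))"
          unfolding dpartial_mult[OF hs smooth_rescale[OF gs]] dpartial_rescale[OF gs]
          by (simp add: rescale_def c_def)
        have "(1 + norm x) ^ k * norm (dpartial is (\<lambda>x. h x * rescale \<epsilon> g x) x)
           \<le> (1 + norm x) ^ k * (\<Sum>p\<leftarrow>splits is. norm (dpartial (fst p) h x * (of_real c ^ length (snd p) *
                 (of_real (c ^ CARD('n)) * dpartial (snd p) g (c *\<^sub>R x)))))"
          unfolding dexp by (intro mult_left_mono norm_sum_list_le) auto
        also have "\<dots> = (\<Sum>p\<leftarrow>splits is. (1 + norm x) ^ k * norm (dpartial (fst p) h x * (of_real c ^ length (snd p) *
                 (of_real (c ^ CARD('n)) * dpartial (snd p) g (c *\<^sub>R x)))))"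
          by (rule sum_list_const_mult[symmetric])
        also have "\<dots> \<le> (\<Sum>p\<leftarrow>splits is. \<epsilon> ^ n0 * ((1 + KC (fst p)) * (Kg (snd p) (k + L p) / \<rho> ^ L p)))"
        proof (rule sum_list_mono)
          fix p assume p: "p \<in> set (splits is)"
          have sc: "(1 + norm x) ^ k * c ^ (length (snd p) + CARD('n)) * norm (dpartial (snd p) g (c *\<^sub>R x))
              \<le> \<epsilon> ^ n0 * (Kg (snd p) (k + L p) / \<rho> ^ (length (snd p) + CARD('n) + n0))"
            unfolding c_def
          proof (rule scalar_term2[OF _ _ rho xr norm_ge_zero])
            show "(1 + norm (inverse \<epsilon> *\<^sub>R x)) ^ (k + (length (snd p) + CARD('n) + n0)) * norm (dpartial (snd p) g (inverse \<epsilon> *\<^sub>R x))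
                \<le> Kg (snd p) (k + L p)"
              using Kg[of "inverse \<epsilon> *\<^sub>R x" "k + L p" "snd p"] unfolding L_def .
          qed (use e in auto)
          have "(1 + norm x) ^ k * norm (dpartial (fst p) h x * (of_real c ^ length (snd p) *
                 (of_real (c ^ CARD('n)) * dpartial (snd p) g (c *\<^sub>R x))))
              = norm (dpartial (fst p) h x) * ((1 + norm x) ^ k * c ^ (length (snd p) + CARD('n)) * norm (dpartial (snd p) g (c *\<^sub>R x)))"
            using c0 by (simp add: norm_mult norm_power power_add mult_ac)
          also have "\<dots> \<le> (1 + KC (fst p)) * (\<epsilon> ^ n0 * (Kg (snd p) (k + L p) / \<rho> ^ L p))"
            unfolding L_def
            by (rule mult_mono[OF KH sc[unfolded L_def]]) (use c0 in \<open>auto simp: KC0 add_nonneg_nonneg\<close>)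
          finally show "(1 + norm x) ^ k * norm (dpartial (fst p) h x * (of_real c ^ length (snd p) *
                 (of_real (c ^ CARD('n)) * dpartial (snd p) g (c *\<^sub>R x))))
              \<le> \<epsilon> ^ n0 * ((1 + KC (fst p)) * (Kg (snd p) (k + L p) / \<rho> ^ L p))" by (simp add: mult_ac)
        qed
        also have "\<dots> = \<epsilon> ^ n0 * K" unfolding K_def by (rule sum_list_const_mult)
        also have "\<dots> \<le> \<epsilon> powr \<delta> * K" using en[of \<epsilon>] e K0 by (intro mult_right_mono) auto
        finally show ?thesis by (simp add: mult.commute)
      qed
    qed
  qed
  have "\<exists>K::real. \<forall>s\<in>{(is :: 'n list, k::nat). length is \<le> m \<and> k \<le> m}. \<forall>\<epsilon> x. 0 < \<epsilon> \<and> \<epsilon> \<le> 1 \<longrightarrow>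
      (1 + norm x) ^ snd s * norm (dpartial (fst s) (\<lambda>x. h x * rescale \<epsilon> g x) x) \<le> K * \<epsilon> powr \<delta>"
  proof (rule finite_bound_choice[OF finite_islk])
    fix s :: "'n list \<times> nat" and K K' :: real
    assume "\<forall>\<epsilon> x. 0 < \<epsilon> \<and> \<epsilon> \<le> 1 \<longrightarrow> (1 + norm x) ^ snd s * norm (dpartial (fst s) (\<lambda>x. h x * rescale \<epsilon> g x) x) \<le> K * \<epsilon> powr \<delta>"
      and "K \<le> K'"
    then show "\<forall>\<epsilon> x. 0 < \<epsilon> \<and> \<epsilon> \<le> 1 \<longrightarrow> (1 + norm x) ^ snd s * norm (dpartial (fst s) (\<lambda>x. h x * rescale \<epsilon> g x) x) \<le> K' * \<epsilon> powr \<delta>"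
      by (meson mult_right_mono order_trans powr_ge_zero)
  qed (use one in auto)
  then obtain K where K: "\<forall>s\<in>{(is :: 'n list, k::nat). length is \<le> m \<and> k \<le> m}. \<forall>\<epsilon> x. 0 < \<epsilon> \<and> \<epsilon> \<le> 1 \<longrightarrow>
      (1 + norm x) ^ snd s * norm (dpartial (fst s) (\<lambda>x. h x * rescale \<epsilon> g x) x) \<le> K * \<epsilon> powr \<delta>" by blast
  show ?thesis
  proof (intro exI[of _ K] allI impI)
    fix \<epsilon> :: real assume e: "0 < \<epsilon> \<and> \<epsilon> \<le> 1"
    show "schwartz_seminorm m (\<lambda>x. (1 - cf x) * rescale \<epsilon> g x) \<le> K * \<epsilon> powr \<delta>"
      by (rule seminorm_le) (use K e in \<open>auto simp: h_def\<close>)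
  qed
qed



lemma cf_minus_bounds:
  assumes cf: "smooth_fun cf" and KC: "\<forall>is x. norm (dpartial is cf x) \<le> KC is"
  shows "\<exists>K. \<forall>x. norm (dpartial is (\<lambda>x. 1 - cf x) x) \<le> K"
proof -
  have "norm (dpartial is (\<lambda>x. 1 - cf x) x) \<le> 1 + KC is" for x
  proof -
    have "norm (dpartial is (\<lambda>x. 1 - cf x) x) = norm (dpartial is (\<lambda>_. 1) x - dpartial is cf x)"
      unfolding dpartial_minus[OF smooth_const cf] by simp
    also have "\<dots> \<le> norm (dpartial is (\<lambda>_. 1::complex) x) + norm (dpartial is cf x)" by (rule norm_triangle_ineq4)
    also have "\<dots> \<le> 1 + KC is" using KC by (intro add_mono) (auto simp: dpartial_const)
    finally show ?thesis .
  qed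
  thus ?thesis by blast
qed

lemma partA:
  fixes T :: "(real^'n::finite \<Rightarrow> complex) \<Rightarrow> complex"
  assumes T: "tempered T" and O: "Odist T \<delta>" and g: "schwartz g"
  shows "\<exists>K. \<forall>\<epsilon>. 0 < \<epsilon> \<and> \<epsilon> \<le> 1 \<longrightarrow> norm (T (rescale \<epsilon> g)) \<le> K * \<epsilon> powr \<delta>"
proof -
  obtain U and ta :: "('n \<Rightarrow> nat) \<Rightarrow> real^'n \<Rightarrow> complex" where
    U: "open U" "0 \<in> U" and fin: "finite {\<alpha>. \<exists>q\<in>U. ta \<alpha> q \<noteq> 0}"
    and tz: "\<forall>\<alpha>. \<delta> + real (mabs \<alpha>) < 0 \<longrightarrow> (\<forall>q\<in>U. ta \<alpha> q = 0)"
    and tb: "\<forall>\<alpha>. \<exists>C. \<forall>q\<in>U. q \<noteq> 0 \<longrightarrow> norm (ta \<alpha> q) \<le> C * norm q powr (\<delta> + real (mabs \<alpha>))"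
    and rep: "\<forall>\<phi>. smooth_fun \<phi> \<and> compact (tsupport \<phi>) \<and> tsupport \<phi> \<subseteq> U \<longrightarrow>
        T \<phi> = (\<Sum>\<alpha>\<in>{\<alpha>. \<exists>q\<in>U. ta \<alpha> q \<noteq> 0}. (-1) ^ mabs \<alpha> * fun_dist (ta \<alpha>) (mpartial \<alpha> \<phi>))"
    using O unfolding Odist_def by blast
  define F where "F = {\<alpha>. \<exists>q\<in>U. ta \<alpha> q \<noteq> 0}"
  obtain r where r: "0 < r" "cball 0 r \<subseteq> U" using U open_contains_cball by blast
  obtain cf :: "real^'n \<Rightarrow> complex" where cf: "smooth_fun cf" "\<forall>x. norm x < r / 2 \<longrightarrow> cf x = 1"
      "\<forall>x. r \<le> norm x \<longrightarrow> cf x = 0" and cfb: "\<forall>is. \<exists>K. \<forall>x. norm (dpartial is cf x) \<le> K"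
    using bump_exists[of "r/2" r] r by auto
  obtain KC where KC: "\<forall>is x. norm (dpartial is cf x) \<le> KC is" using cfb by metis
  obtain C where C: "\<forall>\<alpha>. \<forall>q\<in>U. q \<noteq> 0 \<longrightarrow> norm (ta \<alpha> q) \<le> C \<alpha> * norm q powr (\<delta> + real (mabs \<alpha>))"
    using tb by metis
  have "\<exists>K::real. \<forall>\<alpha>\<in>F. \<forall>\<epsilon>. 0 < \<epsilon> \<and> \<epsilon> \<le> 1 \<longrightarrow>
     norm (LINT q|lborel. ta \<alpha> q * dpartial (mlist \<alpha>) (\<lambda>x. cf x * rescale \<epsilon> g x) q) \<le> K * \<epsilon> powr \<delta>"
  proof (rule finite_bound_choice)
    show "finite F" using fin by (simp add: F_def)
    fix \<alpha> assume "\<alpha> \<in> F"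
    show "\<exists>K. \<forall>\<epsilon>. 0 < \<epsilon> \<and> \<epsilon> \<le> 1 \<longrightarrow>
     norm (LINT q|lborel. ta \<alpha> q * dpartial (mlist \<alpha>) (\<lambda>x. cf x * rescale \<epsilon> g x) q) \<le> K * \<epsilon> powr \<delta>"
      by (rule term1_bound[OF r(2) _ _ cf(1) cf(3) KC g, of "ta \<alpha>" "C \<alpha>" \<delta>])
         (use C tz in \<open>auto simp: length_mlist\<close>)
  next
    fix \<alpha> and K K' :: real assume "\<forall>\<epsilon>. 0 < \<epsilon> \<and> \<epsilon> \<le> 1 \<longrightarrow>
     norm (LINT q|lborel. ta \<alpha> q * dpartial (mlist \<alpha>) (\<lambda>x. cf x * rescale \<epsilon> g x) q) \<le> K * \<epsilon> powr \<delta>" "K \<le> K'"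
    then show "\<forall>\<epsilon>. 0 < \<epsilon> \<and> \<epsilon> \<le> 1 \<longrightarrow>
     norm (LINT q|lborel. ta \<alpha> q * dpartial (mlist \<alpha>) (\<lambda>x. cf x * rescale \<epsilon> g x) q) \<le> K' * \<epsilon> powr \<delta>"
      by (meson mult_right_mono order_trans powr_ge_zero)
  qed
  then obtain K1 where K1: "\<forall>\<alpha>\<in>F. \<forall>\<epsilon>. 0 < \<epsilon> \<and> \<epsilon> \<le> 1 \<longrightarrow>
     norm (LINT q|lborel. ta \<alpha> q * dpartial (mlist \<alpha>) (\<lambda>x. cf x * rescale \<epsilon> g x) q) \<le> K1 * \<epsilon> powr \<delta>" by blast
  obtain C0 m0 where C0: "C0 \<ge> 0" "\<forall>f. schwartz f \<longrightarrow> norm (T f) \<le> C0 * schwartz_seminorm m0 f"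
    using tempered_bound[OF T] by blast
  obtain K2 where K2: "\<forall>\<epsilon>. 0 < \<epsilon> \<and> \<epsilon> \<le> 1 \<longrightarrow> schwartz_seminorm m0 (\<lambda>x. (1 - cf x) * rescale \<epsilon> g x) \<le> K2 * \<epsilon> powr \<delta>"
    using term2_bound[OF cf(1) cf(2) _ KC g, of m0 \<delta>] r by auto
  show ?thesis
  proof (intro exI[of _ "real (card F) * norm (normc TYPE('n)) * K1 + C0 * K2"] allI impI)
    fix \<epsilon> :: real assume e: "0 < \<epsilon> \<and> \<epsilon> \<le> 1"
    define ge where "ge = rescale \<epsilon> g"
    have ges: "schwartz ge" unfolding ge_def using g e by (intro schwartz_rescale) auto
    define \<phi>1 where "\<phi>1 = (\<lambda>x. cf x * ge x)"
    define \<phi>2 where "\<phi>2 = (\<lambda>x. (1 - cf x) * ge x)"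
    have s1: "schwartz \<phi>1" unfolding \<phi>1_def by (rule schwartz_mult[OF cf(1) _ ges]) (use cfb in blast)
    have s2: "schwartz \<phi>2" unfolding \<phi>2_def
      by (rule schwartz_mult[OF smooth_minus[OF smooth_const cf(1)] _ ges]) (rule cf_minus_bounds[OF cf(1) KC])
    have split: "T ge = T \<phi>1 + T \<phi>2"
    proof -
      have "(\<lambda>x. \<phi>1 x + \<phi>2 x) = ge" unfolding \<phi>1_def \<phi>2_def by (auto simp: algebra_simps)
      then show ?thesis using tempered_linear(1)[OF T s1 s2] by simp
    qed
    have supp: "tsupport \<phi>1 \<subseteq> cball 0 r"
      unfolding tsupport_def
    proof (rule closure_minimal)
      show "{x. \<phi>1 x \<noteq> 0} \<subseteq> cball 0 r" using cf(3) by (auto simp: \<phi>1_def) (meson le_less_linear less_imp_le)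
    qed simp
    have comp: "compact (tsupport \<phi>1)"
      unfolding compact_eq_bounded_closed using supp bounded_cball bounded_subset
      by (auto simp: tsupport_def)
    have "T \<phi>1 = (\<Sum>\<alpha>\<in>F. (-1) ^ mabs \<alpha> * fun_dist (ta \<alpha>) (mpartial \<alpha> \<phi>1))"
      using rep schwartz_smooth[OF s1] comp supp r(2) unfolding F_def by blast
    then have "norm (T \<phi>1) \<le> (\<Sum>\<alpha>\<in>F. norm ((-1) ^ mabs \<alpha> * fun_dist (ta \<alpha>) (mpartial \<alpha> \<phi>1)))"
      by (simp add: norm_sum)
    also have "\<dots> \<le> (\<Sum>\<alpha>\<in>F. norm (normc TYPE('n)) * K1 * \<epsilon> powr \<delta>)"
    proof (rule sum_mono)
      fix \<alpha> assume a: "\<alpha> \<in> F"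
      have "norm ((-1) ^ mabs \<alpha> * fun_dist (ta \<alpha>) (mpartial \<alpha> \<phi>1))
          = norm (normc TYPE('n)) * norm (LINT q|lborel. ta \<alpha> q * dpartial (mlist \<alpha>) (\<lambda>x. cf x * rescale \<epsilon> g x) q)"
        by (simp add: norm_mult norm_power fun_dist_def mpartial_def \<phi>1_def ge_def)
      also have "\<dots> \<le> norm (normc TYPE('n)) * (K1 * \<epsilon> powr \<delta>)"
        using K1 a e by (intro mult_left_mono) auto
      finally show "norm ((-1) ^ mabs \<alpha> * fun_dist (ta \<alpha>) (mpartial \<alpha> \<phi>1)) \<le> norm (normc TYPE('n)) * K1 * \<epsilon> powr \<delta>"
        by (simp add: mult_ac)
    qed
    also have "\<dots> = real (card F) * norm (normc TYPE('n)) * K1 * \<epsilon> powr \<delta>" by simp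
    finally have n1: "norm (T \<phi>1) \<le> real (card F) * norm (normc TYPE('n)) * K1 * \<epsilon> powr \<delta>" .
    have "norm (T \<phi>2) \<le> C0 * schwartz_seminorm m0 \<phi>2" using C0 s2 by blast
    also have "\<dots> \<le> C0 * (K2 * \<epsilon> powr \<delta>)" using K2 e C0(1) unfolding \<phi>2_def ge_def by (intro mult_left_mono) auto
    finally have n2: "norm (T \<phi>2) \<le> C0 * K2 * \<epsilon> powr \<delta>" by (simp add: mult_ac)
    have "norm (T (rescale \<epsilon> g)) \<le> norm (T \<phi>1) + norm (T \<phi>2)"
      unfolding ge_def[symmetric] split by (rule norm_triangle_ineq)
    also have "\<dots> \<le> (real (card F) * norm (normc TYPE('n)) * K1 + C0 * K2) * \<epsilon> powr \<delta>"
      using n1 n2 by (simp add: distrib_right)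
    finally show "norm (T (rescale \<epsilon> g)) \<le> (real (card F) * norm (normc TYPE('n)) * K1 + C0 * K2) * \<epsilon> powr \<delta>" .
  qed
qed



lemma fun_dist_rescale:
  assumes e: "0 < \<epsilon>"
  shows "fun_dist (\<lambda>_. 1) (rescale \<epsilon> g) = fun_dist (\<lambda>_. 1) (g :: real^'n::finite \<Rightarrow> complex)"
proof -
  define c where "c = inverse \<epsilon>"
  have c0: "0 < c" using e by (simp add: c_def)
  have "(LINT q|lborel. g q) = \<bar>c\<bar> ^ DIM(real^'n) *\<^sub>R (LINT q|lborel. g (c *\<^sub>R q))"
    by (rule integral_scale) (use c0 in simp)
  also have "\<dots> = (LINT q|lborel. of_real (c ^ CARD('n)) * g (c *\<^sub>R q))"
    using c0 by (simp add: scaleR_conv_of_real)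
  finally show ?thesis by (simp add: fun_dist_def rescale_def c_def)
qed

lemma powr_tendsto0: "0 < d \<Longrightarrow> ((\<lambda>\<epsilon>::real. \<epsilon> powr d) \<longlongrightarrow> 0) (at_right 0)"
  by (rule tendsto_zero_powrI[where b=d]) (auto intro!: tendsto_intros simp: eventually_at_right_field intro: exI[of _ 1])

lemma eventually_01: "\<forall>\<^sub>F \<epsilon> in at_right (0::real). 0 < \<epsilon> \<and> \<epsilon> \<le> 1"
  unfolding eventually_at_right_field by (intro exI[of _ 1]) auto

lemma partB:
  fixes T :: "(real^'n::finite \<Rightarrow> complex) \<Rightarrow> complex"
  assumes T: "tempered T" and d: "\<delta> > 0" and O: "Odist (\<lambda>\<phi>. T \<phi> - c * fun_dist (\<lambda>_. 1) \<phi>) \<delta>"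
  shows "has_value_at_zero T c"
  unfolding has_value_at_zero_def
proof (intro allI impI)
  fix g :: "real^'n \<Rightarrow> complex" assume g: "schwartz g \<and> fun_dist (\<lambda>_. 1) g = 1"
  define T' where "T' = (\<lambda>\<phi>. T \<phi> - c * fun_dist (\<lambda>_. 1) \<phi>)"
  have T': "tempered T'" unfolding T'_def by (rule tempered_diff[OF T fun_dist_one_tempered])
  obtain K where K: "\<forall>\<epsilon>. 0 < \<epsilon> \<and> \<epsilon> \<le> 1 \<longrightarrow> norm (T' (rescale \<epsilon> g)) \<le> K * \<epsilon> powr \<delta>"
    using partA[OF T' _ conjunct1[OF g]] O unfolding T'_def by blast
  have "((\<lambda>\<epsilon>. T' (rescale \<epsilon> g)) \<longlongrightarrow> 0) (at_right 0)"
  proof (rule tendsto_0_le[OF powr_tendsto0[OF d]])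
    show "\<forall>\<^sub>F \<epsilon> in at_right 0. norm (T' (rescale \<epsilon> g)) \<le> norm (\<epsilon> powr \<delta>) * K"
      using eventually_01 by eventually_elim (use K in \<open>auto simp: mult.commute\<close>)
  qed
  then have "((\<lambda>\<epsilon>. T' (rescale \<epsilon> g) + c) \<longlongrightarrow> 0 + c) (at_right 0)" by (intro tendsto_add tendsto_const)
  then have "((\<lambda>\<epsilon>. T' (rescale \<epsilon> g) + c) \<longlongrightarrow> c) (at_right 0)" by simp
  then show "((\<lambda>\<epsilon>. T (rescale \<epsilon> g)) \<longlongrightarrow> c) (at_right 0)"
  proof (rule Lim_transform_eventually)
    show "\<forall>\<^sub>F \<epsilon> in at_right 0. T' (rescale \<epsilon> g) + c = T (rescale \<epsilon> g)"
      using eventually_01 by eventually_elim (use g in \<open>auto simp: T'_def fun_dist_rescale\<close>)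
  qed
qed

lemma partC:
  fixes T :: "(real^'n::finite \<Rightarrow> complex) \<Rightarrow> complex"
  assumes T: "tempered T" and w: "\<omega> \<ge> 1" "\<delta> + 1 > real \<omega>" and O: "Odist T \<delta>"
  shows "zero_of_order T \<omega>"
  unfolding zero_of_order_def has_value_at_zero_def
proof (intro allI impI)
  fix \<gamma> :: "'n \<Rightarrow> nat" and g :: "real^'n \<Rightarrow> complex"
  assume ga: "mabs \<gamma> < \<omega>" and g: "schwartz g \<and> fun_dist (\<lambda>_. 1) g = 1"
  define m where "m = mabs \<gamma>"
  define g' where "g' = mpartial \<gamma> g"
  have g's: "schwartz g'" unfolding g'_def mpartial_def using g by (intro schwartz_dpartial) auto
  have dm: "real m < \<delta>" using ga w unfolding m_def by linarith
  obtain K where K: "\<forall>\<epsilon>. 0 < \<epsilon> \<and> \<epsilon> \<le> 1 \<longrightarrow> norm (T (rescale \<epsilon> g')) \<le> K * \<epsilon> powr \<delta>"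
    using partA[OF T O g's] by blast
  have eq: "dist_deriv \<gamma> T (rescale \<epsilon> g) = (-1) ^ m * (of_real (inverse \<epsilon>) ^ m * T (rescale \<epsilon> g'))"
    if e: "0 < \<epsilon>" for \<epsilon>
  proof -
    have "mpartial \<gamma> (rescale \<epsilon> g) = (\<lambda>q. of_real (inverse \<epsilon>) ^ m * rescale \<epsilon> g' q)"
      unfolding mpartial_def dpartial_rescale[OF schwartz_smooth[OF conjunct1[OF g]]] g'_def m_def length_mlist ..
    moreover have "T (\<lambda>q. of_real (inverse \<epsilon>) ^ m * rescale \<epsilon> g' q) = of_real (inverse \<epsilon>) ^ m * T (rescale \<epsilon> g')"
      by (rule tempered_linear(2)[OF T schwartz_rescale[OF g's e]])
    ultimately show ?thesis by (simp add: dist_deriv_def m_def)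
  qed
  show "((\<lambda>\<epsilon>. dist_deriv \<gamma> T (rescale \<epsilon> g)) \<longlongrightarrow> 0) (at_right 0)"
  proof (rule tendsto_0_le[OF powr_tendsto0[of "\<delta> - real m"]])
    show "0 < \<delta> - real m" using dm by simp
    show "\<forall>\<^sub>F \<epsilon> in at_right 0. norm (dist_deriv \<gamma> T (rescale \<epsilon> g)) \<le> norm (\<epsilon> powr (\<delta> - real m)) * K"
      using eventually_01
    proof eventually_elim
      case (elim \<epsilon>)
      have "norm (dist_deriv \<gamma> T (rescale \<epsilon> g)) = inverse \<epsilon> ^ m * norm (T (rescale \<epsilon> g'))"
        using elim by (simp add: eq norm_mult norm_power norm_inverse)
      also have "\<dots> \<le> inverse \<epsilon> ^ m * (K * \<epsilon> powr \<delta>)" using K elim by (intro mult_left_mono) auto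
      also have "inverse \<epsilon> ^ m * (K * \<epsilon> powr \<delta>) = \<epsilon> powr (\<delta> - real m) * K"
        using elim by (simp add: powr_diff powr_realpow power_inverse divide_inverse mult_ac)
      finally show ?case using elim by simp
    qed
  qed
qed

theorem theorem3p5:
  fixes dummy :: "'n::finite itself"
  shows "(\<forall>(T :: (real^'n \<Rightarrow> complex) \<Rightarrow> complex) \<delta>. tempered T \<and> Odist T \<delta> \<longrightarrow>
            (\<forall>g. schwartz g \<longrightarrow>
               (\<lambda>\<epsilon>. T (rescale \<epsilon> g)) \<in> O[at_right 0](\<lambda>\<epsilon>. complex_of_real (\<epsilon> powr \<delta>)))) \<and>
         (\<forall>(T :: (real^'n \<Rightarrow> complex) \<Rightarrow> complex) \<delta> c. tempered T \<and> \<delta> > 0 \<and>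
             Odist (\<lambda>\<phi>. T \<phi> - c * fun_dist (\<lambda>_. 1) \<phi>) \<delta> \<longrightarrow> has_value_at_zero T c) \<and>
         (\<forall>(T :: (real^'n \<Rightarrow> complex) \<Rightarrow> complex) \<delta> (\<omega>::nat). tempered T \<and> \<omega> \<ge> 1 \<and>
             \<delta> + 1 > real \<omega> \<and> Odist T \<delta> \<longrightarrow> zero_of_order T \<omega>)"
proof (intro conjI allI impI)
  fix T :: "(real^'n \<Rightarrow> complex) \<Rightarrow> complex" and \<delta> :: real and g :: "real^'n \<Rightarrow> complex"
  assume TO: "tempered T \<and> Odist T \<delta>" and g: "schwartz g"
  obtain K where K: "\<forall>\<epsilon>. 0 < \<epsilon> \<and> \<epsilon> \<le> 1 \<longrightarrow> norm (T (rescale \<epsilon> g)) \<le> K * \<epsilon> powr \<delta>"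
    using partA[OF conjunct1[OF TO] conjunct2[OF TO] g] by blast
  show "(\<lambda>\<epsilon>. T (rescale \<epsilon> g)) \<in> O[at_right 0](\<lambda>\<epsilon>. complex_of_real (\<epsilon> powr \<delta>))"
  proof (rule bigoI)
    show "\<forall>\<^sub>F \<epsilon> in at_right 0. norm (T (rescale \<epsilon> g)) \<le> K * norm (complex_of_real (\<epsilon> powr \<delta>))"
      using eventually_01 by eventually_elim (use K in auto)
  qed
next
  fix T :: "(real^'n \<Rightarrow> complex) \<Rightarrow> complex" and \<delta> :: real and c
  assume "tempered T \<and> 0 < \<delta> \<and> Odist (\<lambda>\<phi>. T \<phi> - c * fun_dist (\<lambda>_. 1) \<phi>) \<delta>"
  then show "has_value_at_zero T c" using partB by blast
next
  fix T :: "(real^'n \<Rightarrow> complex) \<Rightarrow> complex" and \<delta> :: real and \<omega> :: nat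
  assume "tempered T \<and> 1 \<le> \<omega> \<and> real \<omega> < \<delta> + 1 \<and> Odist T \<delta>"
  then show "zero_of_order T \<omega>" using partC by blast
qed

end
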